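(* Assume the generic setting with Conditions (C1) and (C2), where $(\alpha_t)$ satisfies the step-size condition (A). Define: - $L_t:=f(x_t)-f(x^\star)-\alpha_tB$; - $T_0$ as in the context; - $Z:=Y+\kappa/2$, $D:=\mathbb E[e^{\lambda Z}]$, $E:=\mathbb E[(e^{\lambda Z}-1-\lambda Z)/\lambda^2]$; - $Q:=\min\{\lambda,\kappa/(2E)\}$; - $G\in(0,1]$ a constant with $\alpha_t\ge\sqrt G\,\alpha_{\lfloor t/2\rfloor}$ for all $t\ge1$; - for $n\in\mathbb N$, $H_n:=D\,e^{\kappa QG^n/2}/(1-e^{-\kappa QG^n/2})$. Then for all $n\in\mathbb N$ and $t$ with $\lfloor t/2^n\rfloor\ge\max\{T_0,1\}$, and all $z\ge0$, $$\mathbb P(L_{t+1}\ge z)\le \exp\Big(-\frac{QG^n}{\alpha_t}\Big(z-F-\alpha_0B+\frac{\kappa}{2}\sum_{s=\lfloor t/2^n\rfloor}^{t}\alpha_s\Big)\Big)+H_n\exp\Big(-\frac{QG^n}{\alpha_t}z\Big).$$ If moreover $\frac{\kappa}{2}\sum_{s=\lfloor t/2^n\rfloor}^{t}\alpha_s\ge F+\alpha_0B$, then $$\mathbb E[L_{t+1}]\le\frac{1+H_n}{QG^n}\,\alpha_t.$$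
   Context: Generic setting. $\mathcal X\subseteq\mathbb R^d$ is a nonempty closed bounded convex set, $f:\mathcal X\to\mathbb R$ is continuous, $x^\star$ is a minimizer of $f$ on $\mathcal X$, and $F:=\max_{\mathcal X}f-\min_{\mathcal X}f$. On a probability space with filtration $(\mathcal F_t)_{t\ge0}$, $(x_t)_{t\ge0}$ is an $\mathcal X$-valued adapted process, and $(\alpha_t)_{t\ge0}$ is a deterministic sequence of positive step sizes. (C1): there exist $\kappa>0$ and $B>0$ such that for every $t\ge0$, almost surely on $\{f(x_t)-f(x^\star)\ge\alpha_tB\}$, $\mathbb E[f(x_{t+1})-f(x_t)\mid\mathcal F_t]\le-2\alpha_t\kappa$. (C2): there exist $\lambda>0$ and a nonnegative random variable $Y$ with $\mathbb E[e^{\lambda Y}]<\infty$ such that for every $t\ge0$ and $y\ge0$, almost surely $\mathbb P(|f(x_{t+1})-f(x_t)|\ge\alpha_t y\mid\mathcal F_t)\le\mathbb P(Y\ge y)$. Step-size condition (A): $(\alpha_t)$ is positive and nonincreasing, $\sum_t\alpha_t=\infty$, $\liminf_{t\to\infty}\alpha_{2t}/\alpha_t>0$, and $\lim_{t\to\infty}(\alpha_t-\alpha_{t+1})/\alpha_t=0$. $T_0:=\min\{t\ge0:\ (\alpha_s-\alpha_{s+1})/\alpha_s<\kappa/(2B)\ \forall s\ge t\}$. *)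

theory Defs
  imports "HOL-Probability.Probability"
begin

definition T0 :: "(nat \<Rightarrow> real) \<Rightarrow> real \<Rightarrow> real \<Rightarrow> nat" where
  "T0 \<alpha> \<kappa> B = (LEAST t. \<forall>s\<ge>t. (\<alpha> s - \<alpha> (Suc s)) / \<alpha> s < \<kappa> / (2 * B))"

definition stepsize_A :: "(nat \<Rightarrow> real) \<Rightarrow> bool" where
  "stepsize_A \<alpha> \<longleftrightarrow>
     (\<forall>t. \<alpha> t > 0) \<and> decseq \<alpha> \<and>
     filterlim (\<lambda>n. \<Sum>t<n. \<alpha> t) at_top sequentially \<and>
     liminf (\<lambda>t. ereal (\<alpha> (2 * t) / \<alpha> t)) > 0 \<and>
     (\<lambda>t. (\<alpha> t - \<alpha> (Suc t)) / \<alpha> t) \<longlonglongrightarrow> 0"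

definition Dconst :: "'b measure \<Rightarrow> ('b \<Rightarrow> real) \<Rightarrow> real \<Rightarrow> real \<Rightarrow> real" where
  "Dconst N Y lam \<kappa> = integral\<^sup>L N (\<lambda>\<omega>. exp (lam * (Y \<omega> + \<kappa> / 2)))"

definition Econst :: "'b measure \<Rightarrow> ('b \<Rightarrow> real) \<Rightarrow> real \<Rightarrow> real \<Rightarrow> real" where
  "Econst N Y lam \<kappa> = integral\<^sup>L N (\<lambda>\<omega>.
     (exp (lam * (Y \<omega> + \<kappa> / 2)) - 1 - lam * (Y \<omega> + \<kappa> / 2)) / lam\<^sup>2)"

definition Qconst :: "'b measure \<Rightarrow> ('b \<Rightarrow> real) \<Rightarrow> real \<Rightarrow> real \<Rightarrow> real" where
  "Qconst N Y lam \<kappa> = min lam (\<kappa> / (2 * Econst N Y lam \<kappa>))"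

definition Hconst :: "'b measure \<Rightarrow> ('b \<Rightarrow> real) \<Rightarrow> real \<Rightarrow> real \<Rightarrow> real \<Rightarrow> nat \<Rightarrow> real" where
  "Hconst N Y lam \<kappa> G n =
     Dconst N Y lam \<kappa> * exp (\<kappa> * Qconst N Y lam \<kappa> * G ^ n / 2)
       / (1 - exp (- (\<kappa> * Qconst N Y lam \<kappa> * G ^ n / 2)))"

end

theory Submission
  imports Defs
begin


lemma swap_lemma:
  fixes K :: "'a measure" and Wt :: "'a \<Rightarrow> real" and V :: "'a \<Rightarrow> real" and g :: "real \<Rightarrow> real"
  assumes K: "sigma_finite_measure K"
    and [measurable]: "Wt \<in> borel_measurable K" "V \<in> borel_measurable K" "g \<in> borel_measurable borel"
  shows "(\<integral>\<^sup>+\<omega>. ennreal (Wt \<omega>) * (\<integral>\<^sup>+y. ennreal (g y) * indicator {0..V \<omega>} y \<partial>lborel) \<partial>K)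
       = (\<integral>\<^sup>+y. ennreal (g y) * indicator {0..} y * (\<integral>\<^sup>+\<omega>. ennreal (Wt \<omega>) * indicator {\<omega>\<in>space K. y \<le> V \<omega>} \<omega> \<partial>K) \<partial>lborel)"
proof -
  interpret K: sigma_finite_measure K by fact
  interpret P: pair_sigma_finite K lborel
    by (simp add: K lborel.sigma_finite_measure_axioms pair_sigma_finite_def)
  define H where "H = (\<lambda>\<omega> y. ennreal (Wt \<omega>) * ennreal (g y) * (if 0 \<le> y \<and> y \<le> V \<omega> then 1 else 0))"
  have Hm: "case_prod H \<in> borel_measurable (K \<Otimes>\<^sub>M lborel)"
    unfolding H_def by measurable
  have "(\<integral>\<^sup>+\<omega>. ennreal (Wt \<omega>) * (\<integral>\<^sup>+y. ennreal (g y) * indicator {0..V \<omega>} y \<partial>lborel) \<partial>K)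
      = (\<integral>\<^sup>+\<omega>. (\<integral>\<^sup>+y. H \<omega> y \<partial>lborel) \<partial>K)"
    apply (rule nn_integral_cong)
    apply (subst nn_integral_cmult[symmetric])
     apply measurable
    apply (rule nn_integral_cong)
    by (auto simp: H_def indicator_def mult.assoc)
  also have "\<dots> = (\<integral>\<^sup>+y. (\<integral>\<^sup>+\<omega>. H \<omega> y \<partial>K) \<partial>lborel)"
    using P.Fubini'[OF Hm] by simp
  also have "\<dots> = (\<integral>\<^sup>+y. ennreal (g y) * indicator {0..} y * (\<integral>\<^sup>+\<omega>. ennreal (Wt \<omega>) * indicator {\<omega>\<in>space K. y \<le> V \<omega>} \<omega> \<partial>K) \<partial>lborel)"
    apply (rule nn_integral_cong)
    apply (subst nn_integral_cmult[symmetric])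
     apply measurable
    apply (rule nn_integral_cong)
    by (auto simp: H_def indicator_def mult.commute mult.left_commute)
  finally show ?thesis .
qed

lemma ftc_rep:
  fixes h h' :: "real \<Rightarrow> real"
  assumes [measurable]: "h' \<in> borel_measurable borel"
    and d: "\<And>v. v \<ge> 0 \<Longrightarrow> (h has_real_derivative h' v) (at v)"
    and p: "\<And>v. v \<ge> 0 \<Longrightarrow> h' v \<ge> 0" and h0: "h 0 \<ge> 0" and v: "v \<ge> 0"
  shows "ennreal (h v) = ennreal (h 0) + (\<integral>\<^sup>+y. ennreal (h' y) * indicator {0..v} y \<partial>lborel)"
proof -
  have "(\<integral>\<^sup>+y. ennreal (h' y) * indicator {0..v} y \<partial>lborel) = ennreal (h v - h 0)"
    using nn_integral_FTC_Icc[of h' 0 v h] d p v by auto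
  moreover have "h v \<ge> h 0"
    using v d p by (intro deriv_nonneg_imp_mono[of 0 v h h']) auto
  ultimately show ?thesis using h0 by (simp add: ennreal_plus[symmetric])
qed

lemma dominance_nn:
  fixes M :: "'a measure" and N :: "'b measure" and W U :: "'a \<Rightarrow> real" and Y :: "'b \<Rightarrow> real"
    and h h' :: "real \<Rightarrow> real"
  assumes M: "prob_space M" and N: "prob_space N"
    and [measurable]: "W \<in> borel_measurable M" "U \<in> borel_measurable M" "Y \<in> borel_measurable N"
    and U0: "\<And>\<omega>. \<omega> \<in> space M \<Longrightarrow> U \<omega> \<ge> 0" and Y0: "\<And>\<omega>. \<omega> \<in> space N \<Longrightarrow> Y \<omega> \<ge> 0"
    and [measurable]: "h' \<in> borel_measurable borel" "h \<in> borel_measurable borel"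
    and d: "\<And>v. v \<ge> 0 \<Longrightarrow> (h has_real_derivative h' v) (at v)"
    and p: "\<And>v. v \<ge> 0 \<Longrightarrow> h' v \<ge> 0" and h0: "h 0 \<ge> 0"
    and dom: "\<And>y. y \<ge> 0 \<Longrightarrow> (\<integral>\<^sup>+\<omega>. ennreal (W \<omega>) * indicator {\<omega>\<in>space M. y \<le> U \<omega>} \<omega> \<partial>M)
        \<le> (\<integral>\<^sup>+\<omega>. ennreal (W \<omega>) \<partial>M) * emeasure N {\<omega>\<in>space N. y \<le> Y \<omega>}"
  shows "(\<integral>\<^sup>+\<omega>. ennreal (W \<omega>) * ennreal (h (U \<omega>)) \<partial>M)
     \<le> (\<integral>\<^sup>+\<omega>. ennreal (W \<omega>) \<partial>M) * (\<integral>\<^sup>+\<omega>. ennreal (h (Y \<omega>)) \<partial>N)"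
proof -
  interpret M: prob_space M by fact
  interpret N: prob_space N by fact
  define c where "c = (\<integral>\<^sup>+\<omega>. ennreal (W \<omega>) \<partial>M)"
  define I where "I = (\<lambda>v. (\<integral>\<^sup>+y. ennreal (h' y) * indicator {0..v} y \<partial>lborel))"
  have rep: "\<And>v. v \<ge> 0 \<Longrightarrow> ennreal (h v) = ennreal (h 0) + I v"
    unfolding I_def by (rule ftc_rep[OF _ d p h0]) simp_all
  have Ieq: "\<And>v. v \<ge> 0 \<Longrightarrow> I v = ennreal (h v - h 0)"
    unfolding I_def by (rule nn_integral_FTC_Icc[of h' 0 _ h]) (simp_all add: d p)
  have IUm: "(\<lambda>\<omega>. I (U \<omega>)) \<in> borel_measurable M"
  proof -
    have "(\<lambda>\<omega>. ennreal (h (U \<omega>) - h 0)) \<in> borel_measurable M" by measurable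
    then show ?thesis by (rule measurable_cong[THEN iffD1, rotated]) (simp add: Ieq U0)
  qed
  have IYm: "(\<lambda>\<omega>. I (Y \<omega>)) \<in> borel_measurable N"
  proof -
    have "(\<lambda>\<omega>. ennreal (h (Y \<omega>) - h 0)) \<in> borel_measurable N" by measurable
    then show ?thesis by (rule measurable_cong[THEN iffD1, rotated]) (simp add: Ieq Y0)
  qed
  have e1: "(\<integral>\<^sup>+\<omega>. ennreal (W \<omega>) * ennreal (h (U \<omega>)) \<partial>M)
      = (\<integral>\<^sup>+\<omega>. ennreal (W \<omega>) * ennreal (h 0) + ennreal (W \<omega>) * I (U \<omega>) \<partial>M)"
    by (rule nn_integral_cong) (subst rep[OF U0], assumption, simp add: distrib_left)
  have e2: "(\<integral>\<^sup>+\<omega>. ennreal (W \<omega>) * ennreal (h 0) + ennreal (W \<omega>) * I (U \<omega>) \<partial>M)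
     = c * ennreal (h 0) + (\<integral>\<^sup>+\<omega>. ennreal (W \<omega>) * I (U \<omega>) \<partial>M)"
    unfolding c_def
    apply (subst nn_integral_add)
    using IUm apply simp_all
    by (simp add: nn_integral_multc)
  have e3: "(\<integral>\<^sup>+\<omega>. ennreal (W \<omega>) * I (U \<omega>) \<partial>M)
      = (\<integral>\<^sup>+y. ennreal (h' y) * indicator {0..} y * (\<integral>\<^sup>+\<omega>. ennreal (W \<omega>) * indicator {\<omega>\<in>space M. y \<le> U \<omega>} \<omega> \<partial>M) \<partial>lborel)"
    unfolding I_def by (rule swap_lemma) (simp_all add: M.sigma_finite_measure_axioms)
  have e4: "(\<integral>\<^sup>+y. ennreal (h' y) * indicator {0..} y * (\<integral>\<^sup>+\<omega>. ennreal (W \<omega>) * indicator {\<omega>\<in>space M. y \<le> U \<omega>} \<omega> \<partial>M) \<partial>lborel)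
     \<le> (\<integral>\<^sup>+y. c * (ennreal (h' y) * indicator {0..} y * (\<integral>\<^sup>+\<omega>. ennreal 1 * indicator {\<omega>\<in>space N. y \<le> Y \<omega>} \<omega> \<partial>N)) \<partial>lborel)"
  proof (rule nn_integral_mono)
    fix y
    show "ennreal (h' y) * indicator {0..} y * (\<integral>\<^sup>+\<omega>. ennreal (W \<omega>) * indicator {\<omega>\<in>space M. y \<le> U \<omega>} \<omega> \<partial>M)
      \<le> c * (ennreal (h' y) * indicator {0..} y * (\<integral>\<^sup>+\<omega>. ennreal 1 * indicator {\<omega>\<in>space N. y \<le> Y \<omega>} \<omega> \<partial>N))"
    proof (cases "y \<ge> 0")
      case True
      have "(\<integral>\<^sup>+\<omega>. ennreal 1 * indicator {\<omega>\<in>space N. y \<le> Y \<omega>} \<omega> \<partial>N) = emeasure N {\<omega>\<in>space N. y \<le> Y \<omega>}"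
        by simp
      then show ?thesis using mult_left_mono[OF dom[OF True], of "ennreal (h' y) * indicator {0..} y"] unfolding c_def
        by (simp add: mult_ac)
    qed simp
  qed
  have e5: "(\<integral>\<^sup>+y. c * (ennreal (h' y) * indicator {0..} y * (\<integral>\<^sup>+\<omega>. ennreal 1 * indicator {\<omega>\<in>space N. y \<le> Y \<omega>} \<omega> \<partial>N)) \<partial>lborel)
     = c * (\<integral>\<^sup>+y. ennreal (h' y) * indicator {0..} y * (\<integral>\<^sup>+\<omega>. ennreal 1 * indicator {\<omega>\<in>space N. y \<le> Y \<omega>} \<omega> \<partial>N) \<partial>lborel)"
    by (rule nn_integral_cmult) simp
  have e6: "(\<integral>\<^sup>+y. ennreal (h' y) * indicator {0..} y * (\<integral>\<^sup>+\<omega>. ennreal 1 * indicator {\<omega>\<in>space N. y \<le> Y \<omega>} \<omega> \<partial>N) \<partial>lborel)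
     = (\<integral>\<^sup>+\<omega>. ennreal 1 * I (Y \<omega>) \<partial>N)"
    unfolding I_def by (rule swap_lemma[symmetric]) (simp_all add: N.sigma_finite_measure_axioms)
  have e7: "(\<integral>\<^sup>+\<omega>. ennreal (h (Y \<omega>)) \<partial>N) = (\<integral>\<^sup>+\<omega>. ennreal (h 0) + I (Y \<omega>) \<partial>N)"
    by (rule nn_integral_cong) (rule rep[OF Y0], assumption)
  have e8: "(\<integral>\<^sup>+\<omega>. ennreal (h 0) + I (Y \<omega>) \<partial>N) = ennreal (h 0) + (\<integral>\<^sup>+\<omega>. I (Y \<omega>) \<partial>N)"
    apply (subst nn_integral_add)
    using IYm apply simp_all
    by (simp add: N.emeasure_space_1)
  have "(\<integral>\<^sup>+\<omega>. ennreal (W \<omega>) * I (U \<omega>) \<partial>M) \<le> c * (\<integral>\<^sup>+\<omega>. I (Y \<omega>) \<partial>N)"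
    using e3 e4 e5 e6 by simp
  then have "(\<integral>\<^sup>+\<omega>. ennreal (W \<omega>) * ennreal (h (U \<omega>)) \<partial>M) \<le> c * ennreal (h 0) + c * (\<integral>\<^sup>+\<omega>. I (Y \<omega>) \<partial>N)"
    using e1 e2 by (simp add: add_left_mono)
  also have "\<dots> = c * (\<integral>\<^sup>+\<omega>. ennreal (h (Y \<omega>)) \<partial>N)"
    using e7 e8 by (simp add: distrib_left)
  finally show ?thesis unfolding c_def .
qed

lemma dominance_real:
  fixes M :: "'a measure" and N :: "'b measure" and W U :: "'a \<Rightarrow> real" and Y :: "'b \<Rightarrow> real"
    and h h' :: "real \<Rightarrow> real"
  assumes M: "prob_space M" and N: "prob_space N"
    and [measurable]: "W \<in> borel_measurable M" "U \<in> borel_measurable M" "Y \<in> borel_measurable N"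
    and U0: "\<And>\<omega>. \<omega> \<in> space M \<Longrightarrow> U \<omega> \<ge> 0" and Y0: "\<And>\<omega>. \<omega> \<in> space N \<Longrightarrow> Y \<omega> \<ge> 0"
    and W0: "\<And>\<omega>. \<omega> \<in> space M \<Longrightarrow> W \<omega> \<ge> 0"
    and [measurable]: "h' \<in> borel_measurable borel" "h \<in> borel_measurable borel"
    and d: "\<And>v. v \<ge> 0 \<Longrightarrow> (h has_real_derivative h' v) (at v)"
    and p: "\<And>v. v \<ge> 0 \<Longrightarrow> h' v \<ge> 0" and h0: "h 0 \<ge> 0"
    and iW: "integrable M W" and iWh: "integrable M (\<lambda>\<omega>. W \<omega> * h (U \<omega>))"
    and ih: "integrable N (\<lambda>\<omega>. h (Y \<omega>))"
    and dom: "\<And>y. y \<ge> 0 \<Longrightarrow> (\<integral>\<omega>. W \<omega> * indicator {\<omega>\<in>space M. y \<le> U \<omega>} \<omega> \<partial>M)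
        \<le> (\<integral>\<omega>. W \<omega> \<partial>M) * measure N {\<omega>\<in>space N. y \<le> Y \<omega>}"
  shows "(\<integral>\<omega>. W \<omega> * h (U \<omega>) \<partial>M) \<le> (\<integral>\<omega>. W \<omega> \<partial>M) * (\<integral>\<omega>. h (Y \<omega>) \<partial>N)"
proof -
  interpret M: prob_space M by fact
  interpret N: prob_space N by fact
  have hmono: "\<And>v. v \<ge> 0 \<Longrightarrow> h 0 \<le> h v"
    using d p by (intro deriv_nonneg_imp_mono[of 0 _ h h']) auto
  have hpos: "\<And>v. v \<ge> 0 \<Longrightarrow> h v \<ge> 0" using hmono h0 by (meson order.trans)
  have IW: "(\<integral>\<^sup>+\<omega>. ennreal (W \<omega>) \<partial>M) = ennreal (\<integral>\<omega>. W \<omega> \<partial>M)"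
    by (rule nn_integral_eq_integral[OF iW]) (simp add: W0)
  have Ih: "(\<integral>\<^sup>+\<omega>. ennreal (h (Y \<omega>)) \<partial>N) = ennreal (\<integral>\<omega>. h (Y \<omega>) \<partial>N)"
    by (rule nn_integral_eq_integral[OF ih]) (simp add: hpos Y0)
  have IWh: "(\<integral>\<^sup>+\<omega>. ennreal (W \<omega>) * ennreal (h (U \<omega>)) \<partial>M) = ennreal (\<integral>\<omega>. W \<omega> * h (U \<omega>) \<partial>M)"
  proof -
    have "(\<integral>\<^sup>+\<omega>. ennreal (W \<omega>) * ennreal (h (U \<omega>)) \<partial>M) = (\<integral>\<^sup>+\<omega>. ennreal (W \<omega> * h (U \<omega>)) \<partial>M)"
      by (rule nn_integral_cong) (simp add: ennreal_mult W0 hpos U0)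
    also have "\<dots> = ennreal (\<integral>\<omega>. W \<omega> * h (U \<omega>) \<partial>M)"
      by (rule nn_integral_eq_integral[OF iWh]) (simp add: W0 hpos U0)
    finally show ?thesis .
  qed
  have i0: "integral\<^sup>L M W \<ge> 0" by (simp add: W0)
  have i1: "(\<integral>\<omega>. h (Y \<omega>) \<partial>N) \<ge> 0" by (simp add: hpos Y0)
  have "(\<integral>\<^sup>+\<omega>. ennreal (W \<omega>) * ennreal (h (U \<omega>)) \<partial>M)
     \<le> (\<integral>\<^sup>+\<omega>. ennreal (W \<omega>) \<partial>M) * (\<integral>\<^sup>+\<omega>. ennreal (h (Y \<omega>)) \<partial>N)"
  proof (rule dominance_nn[OF M N _ _ _ U0 Y0 _ _ d p h0])
    fix y :: real assume y: "y \<ge> 0"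
    have iI: "integrable M (\<lambda>\<omega>. W \<omega> * indicator {\<omega>\<in>space M. y \<le> U \<omega>} \<omega>)"
      by (rule Bochner_Integration.integrable_bound[OF iW]) (auto simp: indicator_def W0)
    have "(\<integral>\<^sup>+\<omega>. ennreal (W \<omega>) * indicator {\<omega>\<in>space M. y \<le> U \<omega>} \<omega> \<partial>M)
        = (\<integral>\<^sup>+\<omega>. ennreal (W \<omega> * indicator {\<omega>\<in>space M. y \<le> U \<omega>} \<omega>) \<partial>M)"
      by (rule nn_integral_cong) (simp add: indicator_def)
    also have "\<dots> = ennreal (\<integral>\<omega>. W \<omega> * indicator {\<omega>\<in>space M. y \<le> U \<omega>} \<omega> \<partial>M)"
      by (rule nn_integral_eq_integral[OF iI]) (simp add: W0)
    also have "\<dots> \<le> ennreal ((\<integral>\<omega>. W \<omega> \<partial>M) * measure N {\<omega>\<in>space N. y \<le> Y \<omega>})"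
      using dom[OF y] by (rule ennreal_leI)
    also have "\<dots> = (\<integral>\<^sup>+\<omega>. ennreal (W \<omega>) \<partial>M) * emeasure N {\<omega>\<in>space N. y \<le> Y \<omega>}"
      by (simp add: IW N.emeasure_eq_measure ennreal_mult i0)
    finally show "(\<integral>\<^sup>+\<omega>. ennreal (W \<omega>) * indicator {\<omega>\<in>space M. y \<le> U \<omega>} \<omega> \<partial>M)
        \<le> (\<integral>\<^sup>+\<omega>. ennreal (W \<omega>) \<partial>M) * emeasure N {\<omega>\<in>space N. y \<le> Y \<omega>}" .
  qed simp_all
  then have "ennreal (\<integral>\<omega>. W \<omega> * h (U \<omega>) \<partial>M) \<le> ennreal ((\<integral>\<omega>. W \<omega> \<partial>M) * (\<integral>\<omega>. h (Y \<omega>) \<partial>N))"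
    using IW Ih IWh by (simp add: ennreal_mult i0 i1)
  then show ?thesis using i0 i1 by (simp add: ennreal_le_iff)
qed

lemma exp_chord: fixes s x :: real assumes "0 \<le> s" "s \<le> 1"
  shows "exp (s * x) \<le> s * exp x + (1 - s)"
  using convex_onD[OF exp_convex, of s 0 x] assms by (simp add: algebra_simps)

lemma psi_scale_deriv: fixes s v :: real shows "((\<lambda>x. s\<^sup>2 * (exp x - 1 - x) - (exp (s * x) - 1 - s * x)) has_real_derivative (s\<^sup>2 * (exp v - 1) - s * (exp (s * v) - 1))) (at v)"
  by (auto intro!: derivative_eq_intros simp: algebra_simps)

lemma psi_scale: fixes s x :: real assumes s: "0 \<le> s" "s \<le> 1" and x: "0 \<le> x"
  shows "exp (s * x) - 1 - s * x \<le> s\<^sup>2 * (exp x - 1 - x)"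
proof -
  define g where "g = (\<lambda>x. s\<^sup>2 * (exp x - 1 - x) - (exp (s * x) - 1 - s * x))"
  define g' where "g' = (\<lambda>x. s\<^sup>2 * (exp x - 1) - s * (exp (s * x) - 1))"
  have d: "(g has_real_derivative g' v) (at v)" for v
    unfolding g_def g'_def by (rule psi_scale_deriv)
  have "g' v \<ge> 0" if "v \<ge> 0" for v
  proof -
    have "exp (s * v) - 1 \<le> s * (exp v - 1)" using exp_chord[OF s, of v] by (simp add: algebra_simps)
    then have "s * (exp (s * v) - 1) \<le> s * (s * (exp v - 1))" using s(1) by (rule mult_left_mono)
    then show ?thesis unfolding g'_def power2_eq_square by (simp add: mult.assoc)
  qed
  then have "g 0 \<le> g x" using deriv_nonneg_imp_mono[of 0 x g g', OF d] x by simp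
  then show ?thesis unfolding g_def by simp
qed

lemma psi_mono: fixes a b :: real assumes "0 \<le> a" "a \<le> b"
  shows "exp a - 1 - a \<le> exp b - 1 - b"
proof -
  have d: "((\<lambda>x. exp x - 1 - x) has_real_derivative (exp v - 1)) (at v)" for v
    by (auto intro!: derivative_eq_intros)
  show ?thesis
    using deriv_nonneg_imp_mono[of a b "\<lambda>x. exp x - 1 - x" "\<lambda>v. exp v - 1", OF d] assms by simp
qed

lemma psi_abs_deriv: "((\<lambda>x. exp x - x - exp (-x) - x) has_real_derivative (exp v + exp (-v) - 2)) (at v)"
  by (rule derivative_eq_intros refl | simp)+

lemma psi_abs: fixes u :: real shows "exp u - 1 - u \<le> exp \<bar>u\<bar> - 1 - \<bar>u\<bar>"
proof (cases "u \<ge> 0")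
  case False
  define v where "v = - u"
  have v: "v \<ge> 0" using False v_def by simp
  have "exp (-v) + v \<le> exp v - v"
  proof -
    have p2: "exp x + exp (-x) - 2 \<ge> 0" for x :: real
      using add_mono[OF exp_ge_add_one_self[of x] exp_ge_add_one_self[of "-x"]] by simp
    have "(\<lambda>x. exp x - x - exp (-x) - x) 0 \<le> (\<lambda>x. exp x - x - exp (-x) - x) v"
      using deriv_nonneg_imp_mono[of 0 v "\<lambda>x. exp x - x - exp (-x) - x" "\<lambda>x. exp x + exp (-x) - 2", OF psi_abs_deriv] v p2 by simp
    then show ?thesis by simp
  qed
  then show ?thesis using False v_def by simp
qed simp




lemma psi_quad: fixes u :: real assumes "u \<ge> 0" shows "u\<^sup>2 / 2 \<le> exp u - 1 - u"
proof -
  have d: "((\<lambda>x. exp x - 1 - x - x\<^sup>2 / 2) has_real_derivative (exp v - 1 - v)) (at v)" for v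
    by (rule derivative_eq_intros refl | simp)+
  have "0 \<le> exp v - 1 - v" for v :: real using exp_ge_add_one_self[of v] by linarith
  then show ?thesis
    using deriv_nonneg_imp_mono[of 0 u "\<lambda>x. exp x - 1 - x - x\<^sup>2 / 2" "\<lambda>v. exp v - 1 - v", OF d] assms by simp
qed

locale setting =
  fixes X :: "'d::euclidean_space set" and f :: "'d \<Rightarrow> real" and xstar :: 'd
    and M :: "'a measure" and Fs :: "nat \<Rightarrow> 'a measure" and x :: "nat \<Rightarrow> 'a \<Rightarrow> 'd"
    and \<alpha> :: "nat \<Rightarrow> real" and \<kappa> B lam G :: real
    and N :: "'b measure" and Y :: "'b \<Rightarrow> real"
  assumes X: "X \<noteq> {}" "closed X" "bounded X" "convex X"
    and f_cont: "continuous_on X f"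
    and xstar: "xstar \<in> X" "\<forall>y\<in>X. f xstar \<le> f y"
    and M: "prob_space M"
    and filt: "filtration (space M) Fs" "\<forall>t. subalgebra M (Fs t)"
    and adapted: "\<forall>t. x t \<in> Fs t \<rightarrow>\<^sub>M borel" "\<forall>t. \<forall>\<omega>\<in>space M. x t \<omega> \<in> X"
    and A: "stepsize_A \<alpha>"
    and C1: "\<kappa> > 0" "B > 0"
      "\<forall>t. AE \<omega> in M. f (x t \<omega>) - f xstar \<ge> \<alpha> t * B \<longrightarrow>
           real_cond_exp M (Fs t) (\<lambda>\<omega>. f (x (Suc t) \<omega>) - f (x t \<omega>)) \<omega> \<le> - 2 * \<alpha> t * \<kappa>"
    and C2: "lam > 0" "prob_space N" "Y \<in> borel_measurable N" "\<forall>\<omega>\<in>space N. Y \<omega> \<ge> 0"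
      "integrable N (\<lambda>\<omega>. exp (lam * Y \<omega>))"
      "\<forall>t. \<forall>y\<ge>0. AE \<omega> in M.
           real_cond_exp M (Fs t)
             (indicator {\<omega>'\<in>space M. \<bar>f (x (Suc t) \<omega>') - f (x t \<omega>')\<bar> \<ge> \<alpha> t * y}) \<omega>
           \<le> measure N {\<omega>'\<in>space N. Y \<omega>' \<ge> y}"
    and G: "0 < G" "G \<le> 1" "\<forall>t\<ge>1. \<alpha> t \<ge> sqrt G * \<alpha> (t div 2)"
begin

sublocale M: prob_space M by (rule M)
sublocale N: prob_space N by (rule C2(2))

definition "Fc = Sup (f ` X) - Inf (f ` X)"
definition "phi t \<omega> = f (x t \<omega>)"
definition "Dc = Dconst N Y lam \<kappa>"
definition "Ec = Econst N Y lam \<kappa>"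
definition "Qc = Qconst N Y lam \<kappa>"

lemma alpha_pos: "\<alpha> t > 0" and alpha_dec: "decseq \<alpha>"
  using A unfolding stepsize_A_def by auto

lemma subalg: "subalgebra M (Fs t)" using filt by auto

lemma space_Fs: "space (Fs t) = space M" using subalg[of t] by (simp add: subalgebra_def)

lemma phi_meas_F[measurable]: "phi t \<in> borel_measurable (Fs t)"
proof -
  define g where "g = (\<lambda>y. indicator X y *\<^sub>R f y)"
  have gm: "g \<in> borel_measurable borel"
    unfolding g_def using X(2) f_cont by (intro borel_measurable_continuous_on_indicator) auto
  have "(\<lambda>\<omega>. g (x t \<omega>)) \<in> borel_measurable (Fs t)"
    using measurable_comp[OF _ gm, of "x t" "Fs t"] adapted(1) by (simp add: comp_def)
  moreover have "\<And>\<omega>. \<omega> \<in> space (Fs t) \<Longrightarrow> g (x t \<omega>) = phi t \<omega>"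
    using adapted(2) space_Fs unfolding g_def phi_def by auto
  ultimately show ?thesis by (metis (no_types, lifting) measurable_cong)
qed

lemma phi_meas[measurable]: "phi t \<in> borel_measurable M"
  by (rule measurable_from_subalg[OF subalg phi_meas_F])

lemma phi_bounds: assumes "\<omega> \<in> space M" shows "f xstar \<le> phi t \<omega>" "phi t \<omega> - f xstar \<le> Fc"
proof -
  have xin: "x t \<omega> \<in> X" using adapted(2) assms by auto
  show "f xstar \<le> phi t \<omega>" using xstar xin unfolding phi_def by auto
  have cpt: "compact (f ` X)"
    using X f_cont by (intro compact_continuous_image) (auto simp: compact_eq_bounded_closed)
  have "phi t \<omega> \<le> Sup (f ` X)" unfolding phi_def
    using cpt xin by (intro cSup_upper) (auto simp: bounded_imp_bdd_above compact_imp_bounded)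
  moreover have "Inf (f ` X) \<le> f xstar"
    using cpt xstar by (intro cInf_lower) (auto simp: bounded_imp_bdd_below compact_imp_bounded)
  ultimately show "phi t \<omega> - f xstar \<le> Fc" unfolding Fc_def by simp
qed

lemma Fc_nonneg: "Fc \<ge> 0"
proof -
  obtain \<omega> where "\<omega> \<in> space M" using M.not_empty by blast
  then show ?thesis using phi_bounds[of \<omega> 0] by simp
qed

lemma T0_prop: assumes "t \<ge> T0 \<alpha> \<kappa> B" shows "(\<alpha> t - \<alpha> (Suc t)) * B \<le> \<alpha> t * \<kappa> / 2"
proof -
  have lim: "(\<lambda>t. (\<alpha> t - \<alpha> (Suc t)) / \<alpha> t) \<longlonglongrightarrow> 0" using A unfolding stepsize_A_def by auto
  have pos: "\<kappa> / (2 * B) > 0" using C1 by simp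
  have "eventually (\<lambda>s. (\<alpha> s - \<alpha> (Suc s)) / \<alpha> s < \<kappa> / (2 * B)) sequentially"
    using order_tendstoD(2)[OF lim pos] .
  then obtain N0 where "\<forall>s\<ge>N0. (\<alpha> s - \<alpha> (Suc s)) / \<alpha> s < \<kappa> / (2 * B)"
    by (auto simp: eventually_sequentially)
  then have "\<forall>s\<ge>T0 \<alpha> \<kappa> B. (\<alpha> s - \<alpha> (Suc s)) / \<alpha> s < \<kappa> / (2 * B)"
    unfolding T0_def by (rule LeastI)
  then have "(\<alpha> t - \<alpha> (Suc t)) / \<alpha> t < \<kappa> / (2 * B)" using assms by auto
  then have "(\<alpha> t - \<alpha> (Suc t)) < \<alpha> t * \<kappa> / (2 * B)" using alpha_pos[of t]
    by (simp add: field_simps)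
  then have "(\<alpha> t - \<alpha> (Suc t)) * (2 * B) < \<alpha> t * \<kappa>"
    using C1(2) by (simp add: pos_less_divide_eq)
  then show ?thesis by simp
qed

lemma c_nonneg: "(\<alpha> t - \<alpha> (Suc t)) * B \<ge> 0"
  using alpha_dec C1(2) by (simp add: decseq_Suc_iff)

end


context setting begin

lemma Zint: "integrable N (\<lambda>\<omega>. exp (lam * (Y \<omega> + \<kappa> / 2)))"
proof -
  have "integrable N (\<lambda>\<omega>. exp (lam * \<kappa> / 2) * exp (lam * Y \<omega>))"
    using C2(5) by simp
  moreover have "\<And>\<omega>. exp (lam * \<kappa> / 2) * exp (lam * Y \<omega>) = exp (lam * (Y \<omega> + \<kappa> / 2))"
    by (simp add: exp_add[symmetric] algebra_simps)
  ultimately show ?thesis by simp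
qed

lemma Ymeas[measurable]: "Y \<in> borel_measurable N" using C2(3) .

lemma Dc_ge1: "Dc \<ge> 1"
proof -
  have "(\<integral>\<omega>. 1 \<partial>N) \<le> Dc" unfolding Dc_def Dconst_def
    using C2(4) C2(1) C1(1) by (intro integral_mono Zint) auto
  then show ?thesis by (simp add: N.prob_space)
qed

lemma psiN_int: "integrable N (\<lambda>\<omega>. exp (lam * (Y \<omega> + \<kappa> / 2)) - 1 - lam * (Y \<omega> + \<kappa> / 2))"
proof (rule Bochner_Integration.integrable_bound[OF Zint])
  show "AE \<omega> in N. norm (exp (lam * (Y \<omega> + \<kappa> / 2)) - 1 - lam * (Y \<omega> + \<kappa> / 2)) \<le> norm (exp (lam * (Y \<omega> + \<kappa> / 2)))"
  proof (rule AE_I2)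
    fix \<omega> assume "\<omega> \<in> space N"
    then have u: "lam * (Y \<omega> + \<kappa> / 2) \<ge> 0" using C2(4) C2(1) C1(1) by auto
    have "0 \<le> exp (lam * (Y \<omega> + \<kappa> / 2)) - 1 - lam * (Y \<omega> + \<kappa> / 2)"
      using exp_ge_add_one_self[of "lam * (Y \<omega> + \<kappa> / 2)"] by linarith
    then show "norm (exp (lam * (Y \<omega> + \<kappa> / 2)) - 1 - lam * (Y \<omega> + \<kappa> / 2)) \<le> norm (exp (lam * (Y \<omega> + \<kappa> / 2)))"
      using u by simp
  qed
qed simp

lemma Ec_eq: "Ec = (\<integral>\<omega>. exp (lam * (Y \<omega> + \<kappa> / 2)) - 1 - lam * (Y \<omega> + \<kappa> / 2) \<partial>N) / lam\<^sup>2"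
  unfolding Ec_def Econst_def by simp

lemma Ec_pos: "Ec \<ge> \<kappa>\<^sup>2 / 8"
proof -
  have "(\<integral>\<omega>. \<kappa>\<^sup>2 / 8 \<partial>N) \<le> (\<integral>\<omega>. (exp (lam * (Y \<omega> + \<kappa> / 2)) - 1 - lam * (Y \<omega> + \<kappa> / 2)) / lam\<^sup>2 \<partial>N)"
  proof (rule integral_mono)
    show "integrable N (\<lambda>\<omega>. (exp (lam * (Y \<omega> + \<kappa> / 2)) - 1 - lam * (Y \<omega> + \<kappa> / 2)) / lam\<^sup>2)"
      using psiN_int by simp
    fix \<omega> assume "\<omega> \<in> space N"
    then have Y0: "Y \<omega> \<ge> 0" using C2(4) by auto
    have u: "lam * (Y \<omega> + \<kappa> / 2) \<ge> 0" using Y0 C2(1) C1(1) by auto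
    have "(lam * (Y \<omega> + \<kappa> / 2))\<^sup>2 / 2 \<le> exp (lam * (Y \<omega> + \<kappa> / 2)) - 1 - lam * (Y \<omega> + \<kappa> / 2)"
      by (rule psi_quad[OF u])
    moreover have "(lam * (Y \<omega> + \<kappa> / 2))\<^sup>2 / 2 / lam\<^sup>2 = (Y \<omega> + \<kappa> / 2)\<^sup>2 / 2"
      using C2(1) by (simp add: power_mult_distrib)
    moreover have "(\<kappa> / 2)\<^sup>2 \<le> (Y \<omega> + \<kappa> / 2)\<^sup>2"
      using Y0 C1(1) by (intro power_mono) auto
    ultimately have "\<kappa>\<^sup>2 / 8 \<le> (lam * (Y \<omega> + \<kappa> / 2))\<^sup>2 / 2 / lam\<^sup>2"
      by (simp add: power_divide)
    also have "\<dots> \<le> (exp (lam * (Y \<omega> + \<kappa> / 2)) - 1 - lam * (Y \<omega> + \<kappa> / 2)) / lam\<^sup>2"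
      using divide_right_mono[OF \<open>(lam * (Y \<omega> + \<kappa> / 2))\<^sup>2 / 2 \<le> _\<close>, of "lam\<^sup>2"] by simp
    finally show "\<kappa>\<^sup>2 / 8 \<le> (exp (lam * (Y \<omega> + \<kappa> / 2)) - 1 - lam * (Y \<omega> + \<kappa> / 2)) / lam\<^sup>2" .
  qed simp
  then show ?thesis unfolding Ec_def Econst_def by (simp add: N.prob_space)
qed

lemma Ec_gt0: "Ec > 0" using Ec_pos C1(1) by (smt (verit) zero_less_power divide_pos_pos)

lemma Qc_pos: "Qc > 0" and Qc_le: "Qc \<le> lam" and QcEc: "Qc * Ec \<le> \<kappa> / 2"
proof -
  show "Qc > 0" unfolding Qc_def Qconst_def Ec_def[symmetric] using C2(1) C1(1) Ec_gt0 by simp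
  show "Qc \<le> lam" unfolding Qc_def Qconst_def by simp
  have "Qc \<le> \<kappa> / (2 * Ec)" unfolding Qc_def Qconst_def Ec_def[symmetric] by simp
  then show "Qc * Ec \<le> \<kappa> / 2" using Ec_gt0 by (simp add: pos_le_divide_eq)
qed

end


context setting begin

lemma fms: "finite_measure_subalgebra M (Fs t)"
  unfolding finite_measure_subalgebra_def finite_measure_subalgebra_axioms_def
  using subalg M.finite_measure_axioms by auto

lemma sfs: "sigma_finite_subalgebra M (Fs t)"
  by (rule finite_measure_subalgebra_is_sigma_finite[OF fms])

lemma meas_from_F: "W \<in> borel_measurable (Fs t) \<Longrightarrow> W \<in> borel_measurable M"
  by (rule measurable_from_subalg[OF subalg])

lemma bdd_int: fixes W :: "'a \<Rightarrow> real"
  assumes "W \<in> borel_measurable M" "\<And>\<omega>. \<omega> \<in> space M \<Longrightarrow> \<bar>W \<omega>\<bar> \<le> K"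
  shows "integrable M W"
  by (rule M.integrable_const_bound[where B=K]) (use assms in auto)

lemma Delta_bound: "\<omega> \<in> space M \<Longrightarrow> \<bar>phi (Suc t) \<omega> - phi t \<omega>\<bar> \<le> Fc"
  using phi_bounds[of \<omega> t] phi_bounds[of \<omega> "Suc t"] by auto

lemma C2_transfer:
  fixes W :: "'a \<Rightarrow> real"
  assumes Wm: "W \<in> borel_measurable (Fs t)" and W0: "\<And>\<omega>. \<omega> \<in> space M \<Longrightarrow> 0 \<le> W \<omega>"
    and Wb: "\<And>\<omega>. \<omega> \<in> space M \<Longrightarrow> W \<omega> \<le> K" and y: "y \<ge> 0"
  shows "(\<integral>\<omega>. W \<omega> * indicator {\<omega>'\<in>space M. \<bar>phi (Suc t) \<omega>' - phi t \<omega>'\<bar> \<ge> \<alpha> t * y} \<omega> \<partial>M)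
     \<le> (\<integral>\<omega>. W \<omega> \<partial>M) * measure N {\<omega>'\<in>space N. Y \<omega>' \<ge> y}"
proof -
  interpret S: sigma_finite_subalgebra M "Fs t" by (rule sfs)
  define S where "S = {\<omega>'\<in>space M. \<bar>phi (Suc t) \<omega>' - phi t \<omega>'\<bar> \<ge> \<alpha> t * y}"
  define P where "P = measure N {\<omega>'\<in>space N. Y \<omega>' \<ge> y}"
  have WM[measurable]: "W \<in> borel_measurable M" by (rule meas_from_F[OF Wm])
  have Sm[measurable]: "S \<in> sets M" unfolding S_def by measurable
  have iWS: "integrable M (\<lambda>\<omega>. W \<omega> * indicator S \<omega>)"
    by (rule bdd_int[where K=K]) (use W0 Wb in \<open>auto simp: indicator_def intro: order.trans\<close>)
  have e1: "(\<integral>\<omega>. W \<omega> * indicator S \<omega> \<partial>M) = (\<integral>\<omega>. W \<omega> * real_cond_exp M (Fs t) (indicator S) \<omega> \<partial>M)"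
    using S.real_cond_exp_intg(2)[OF iWS Wm] by simp
  have i1: "integrable M (\<lambda>\<omega>. W \<omega> * real_cond_exp M (Fs t) (indicator S) \<omega>)"
    using S.real_cond_exp_intg(1)[OF iWS Wm] by simp
  have iW: "integrable M W" by (rule bdd_int[where K=K]) (use W0 Wb in auto)
  have AEc: "AE \<omega> in M. real_cond_exp M (Fs t) (indicator S) \<omega> \<le> P"
    using C2(6) y unfolding S_def P_def phi_def by auto
  have "(\<integral>\<omega>. W \<omega> * real_cond_exp M (Fs t) (indicator S) \<omega> \<partial>M) \<le> (\<integral>\<omega>. W \<omega> * P \<partial>M)"
  proof (rule integral_mono_AE[OF i1])
    show "integrable M (\<lambda>\<omega>. W \<omega> * P)" using iW by simp
    show "AE \<omega> in M. W \<omega> * real_cond_exp M (Fs t) (indicator S) \<omega> \<le> W \<omega> * P"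
      using AEc AE_space by eventually_elim (simp add: W0 mult_left_mono)
  qed
  then show ?thesis using e1 unfolding S_def[symmetric] P_def[symmetric] by simp
qed

lemma C1_transfer:
  fixes W :: "'a \<Rightarrow> real"
  assumes Wm: "W \<in> borel_measurable (Fs t)" and W0: "\<And>\<omega>. \<omega> \<in> space M \<Longrightarrow> 0 \<le> W \<omega>"
    and Wb: "\<And>\<omega>. \<omega> \<in> space M \<Longrightarrow> W \<omega> \<le> K"
    and Ws: "\<And>\<omega>. \<omega> \<in> space M \<Longrightarrow> W \<omega> \<noteq> 0 \<Longrightarrow> \<alpha> t * B \<le> phi t \<omega> - f xstar"
  shows "(\<integral>\<omega>. W \<omega> * (phi (Suc t) \<omega> - phi t \<omega>) \<partial>M) \<le> - 2 * \<alpha> t * \<kappa> * (\<integral>\<omega>. W \<omega> \<partial>M)"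
proof -
  interpret S: sigma_finite_subalgebra M "Fs t" by (rule sfs)
  define g where "g = (\<lambda>\<omega>. phi (Suc t) \<omega> - phi t \<omega>)"
  have WM[measurable]: "W \<in> borel_measurable M" by (rule meas_from_F[OF Wm])
  have gm[measurable]: "g \<in> borel_measurable M" unfolding g_def by measurable
  have iWg: "integrable M (\<lambda>\<omega>. W \<omega> * g \<omega>)"
  proof (rule bdd_int[where K="K * Fc"])
    fix \<omega> assume w: "\<omega> \<in> space M"
    have "\<bar>W \<omega> * g \<omega>\<bar> = W \<omega> * \<bar>g \<omega>\<bar>" using W0[OF w] by (simp add: abs_mult)
    also have "\<dots> \<le> K * Fc" unfolding g_def
      using W0[OF w] Wb[OF w] Delta_bound[OF w] by (intro mult_mono) auto
    finally show "\<bar>W \<omega> * g \<omega>\<bar> \<le> K * Fc" .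
  qed simp
  have e1: "(\<integral>\<omega>. W \<omega> * g \<omega> \<partial>M) = (\<integral>\<omega>. W \<omega> * real_cond_exp M (Fs t) g \<omega> \<partial>M)"
    using S.real_cond_exp_intg(2)[OF iWg Wm] by simp
  have i1: "integrable M (\<lambda>\<omega>. W \<omega> * real_cond_exp M (Fs t) g \<omega>)"
    using S.real_cond_exp_intg(1)[OF iWg Wm] by simp
  have iW: "integrable M W" by (rule bdd_int[where K=K]) (use W0 Wb in auto)
  have AEc: "AE \<omega> in M. \<alpha> t * B \<le> phi t \<omega> - f xstar \<longrightarrow> real_cond_exp M (Fs t) g \<omega> \<le> - 2 * \<alpha> t * \<kappa>"
    using C1(3) unfolding g_def phi_def by auto
  have "(\<integral>\<omega>. W \<omega> * real_cond_exp M (Fs t) g \<omega> \<partial>M) \<le> (\<integral>\<omega>. W \<omega> * (- 2 * \<alpha> t * \<kappa>) \<partial>M)"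
  proof (rule integral_mono_AE[OF i1])
    show "integrable M (\<lambda>\<omega>. W \<omega> * (- 2 * \<alpha> t * \<kappa>))" using iW by simp
    show "AE \<omega> in M. W \<omega> * real_cond_exp M (Fs t) g \<omega> \<le> W \<omega> * (- 2 * \<alpha> t * \<kappa>)"
      using AEc AE_space
    proof eventually_elim
      case (elim \<omega>)
      show ?case
      proof (cases "W \<omega> = 0")
        case False
        then have "real_cond_exp M (Fs t) g \<omega> \<le> - 2 * \<alpha> t * \<kappa>" using elim Ws by auto
        from mult_left_mono[OF this W0[OF elim(2)]] show ?thesis by simp
      qed simp
    qed
  qed
  then show ?thesis using e1 unfolding g_def by (simp add: mult.commute)
qed

end


context setting begin

lemma dom_apply:
  fixes W :: "'a \<Rightarrow> real" and h h' :: "real \<Rightarrow> real"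
  assumes Wm: "W \<in> borel_measurable (Fs t)" and W0: "\<And>\<omega>. \<omega> \<in> space M \<Longrightarrow> 0 \<le> W \<omega>"
    and Wb: "\<And>\<omega>. \<omega> \<in> space M \<Longrightarrow> W \<omega> \<le> K"
    and [measurable]: "h' \<in> borel_measurable borel" "h \<in> borel_measurable borel"
    and d: "\<And>v. v \<ge> 0 \<Longrightarrow> (h has_real_derivative h' v) (at v)"
    and p: "\<And>v. v \<ge> 0 \<Longrightarrow> h' v \<ge> 0" and h0: "h 0 \<ge> 0"
    and ih: "integrable N (\<lambda>\<omega>. h (Y \<omega>))"
  shows "(\<integral>\<omega>. W \<omega> * h (\<bar>phi (Suc t) \<omega> - phi t \<omega>\<bar> / \<alpha> t) \<partial>M) \<le> (\<integral>\<omega>. W \<omega> \<partial>M) * (\<integral>\<omega>. h (Y \<omega>) \<partial>N)"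
proof -
  define U where "U = (\<lambda>\<omega>. \<bar>phi (Suc t) \<omega> - phi t \<omega>\<bar> / \<alpha> t)"
  have WM[measurable]: "W \<in> borel_measurable M" by (rule meas_from_F[OF Wm])
  have Um[measurable]: "U \<in> borel_measurable M" unfolding U_def by measurable
  have ap: "\<alpha> t > 0" by (rule alpha_pos)
  have U0: "\<And>\<omega>. 0 \<le> U \<omega>" unfolding U_def using ap by simp
  have Ub: "\<And>\<omega>. \<omega> \<in> space M \<Longrightarrow> U \<omega> \<le> Fc / \<alpha> t"
    unfolding U_def using Delta_bound ap by (simp add: divide_right_mono)
  have hmono: "\<And>a b. 0 \<le> a \<Longrightarrow> a \<le> b \<Longrightarrow> h a \<le> h b"
    using d p by (intro deriv_nonneg_imp_mono[of _ _ h h']) auto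
  have hpos: "\<And>v. v \<ge> 0 \<Longrightarrow> h v \<ge> 0" using hmono h0 by (meson order.trans order_refl)
  have iW: "integrable M W" by (rule bdd_int[where K=K]) (use W0 Wb in auto)
  have iWh: "integrable M (\<lambda>\<omega>. W \<omega> * h (U \<omega>))"
  proof (rule bdd_int[where K="K * h (Fc / \<alpha> t)"])
    fix \<omega> assume w: "\<omega> \<in> space M"
    have "\<bar>W \<omega> * h (U \<omega>)\<bar> = W \<omega> * h (U \<omega>)" using W0[OF w] hpos[OF U0] by simp
    also have "\<dots> \<le> K * h (Fc / \<alpha> t)"
      using W0[OF w] Wb[OF w] hpos[OF U0] hmono[OF U0 Ub[OF w]] by (intro mult_mono) auto
    finally show "\<bar>W \<omega> * h (U \<omega>)\<bar> \<le> K * h (Fc / \<alpha> t)" .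
  qed simp
  have Y0: "\<And>\<omega>. \<omega> \<in> space N \<Longrightarrow> Y \<omega> \<ge> 0" using C2(4) by auto
  have "(\<integral>\<omega>. W \<omega> * h (U \<omega>) \<partial>M) \<le> (\<integral>\<omega>. W \<omega> \<partial>M) * (\<integral>\<omega>. h (Y \<omega>) \<partial>N)"
  proof (rule dominance_real[OF M C2(2) WM Um Ymeas U0 Y0 W0 _ _ d p h0 iW iWh ih])
    fix y :: real assume y: "y \<ge> 0"
    have "{\<omega>\<in>space M. y \<le> U \<omega>} = {\<omega>'\<in>space M. \<bar>phi (Suc t) \<omega>' - phi t \<omega>'\<bar> \<ge> \<alpha> t * y}"
      unfolding U_def using ap by (auto simp: pos_le_divide_eq mult.commute)
    moreover have "{\<omega>\<in>space N. y \<le> Y \<omega>} = {\<omega>'\<in>space N. Y \<omega>' \<ge> y}" by simp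
    ultimately show "(\<integral>\<omega>. W \<omega> * indicator {\<omega>\<in>space M. y \<le> U \<omega>} \<omega> \<partial>M)
        \<le> (\<integral>\<omega>. W \<omega> \<partial>M) * measure N {\<omega>\<in>space N. y \<le> Y \<omega>}"
      using C2_transfer[OF Wm W0 Wb y] by simp
  qed simp_all
  then show ?thesis unfolding U_def .
qed

end



lemma dexp_aff: "((\<lambda>v. exp (a * (v + b))) has_real_derivative (a * exp (a * (v + b)))) (at v)"
  by (rule derivative_eq_intros refl | simp)+

lemma dpsi_aff: "((\<lambda>v. exp (a * (v + b)) - 1 - a * (v + b)) has_real_derivative (a * (exp (a * (v + b)) - 1))) (at v)"
  by (rule derivative_eq_intros refl | simp add: algebra_simps)+

context setting begin

lemma partB:
  fixes W :: "'a \<Rightarrow> real"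
  assumes t: "t \<ge> T0 \<alpha> \<kappa> B" and eta: "\<eta> > 0" "\<eta> * \<alpha> t \<le> lam"
    and Wm: "W \<in> borel_measurable (Fs t)" and W0: "\<And>\<omega>. \<omega> \<in> space M \<Longrightarrow> 0 \<le> W \<omega>"
    and Wb: "\<And>\<omega>. \<omega> \<in> space M \<Longrightarrow> W \<omega> \<le> K"
  shows "(\<integral>\<omega>. W \<omega> * exp (\<eta> * (phi (Suc t) \<omega> - phi t \<omega> + (\<alpha> t - \<alpha> (Suc t)) * B)) \<partial>M)
     \<le> Dc * (\<integral>\<omega>. W \<omega> \<partial>M)"
proof -
  define c where "c = (\<alpha> t - \<alpha> (Suc t)) * B"
  define r where "r = \<eta> * \<alpha> t"
  define h where "h = (\<lambda>v. exp (r * (v + \<kappa> / 2)))"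
  have ap: "\<alpha> t > 0" by (rule alpha_pos)
  have c0: "0 \<le> c" and c1: "c \<le> \<alpha> t * \<kappa> / 2" unfolding c_def using c_nonneg T0_prop[OF t] by auto
  have r0: "r > 0" unfolding r_def using eta ap by simp
  have rl: "r \<le> lam" unfolding r_def using eta by simp
  have WM[measurable]: "W \<in> borel_measurable M" by (rule meas_from_F[OF Wm])
  have hm[measurable]: "h \<in> borel_measurable borel" unfolding h_def by measurable
  have ih: "integrable N (\<lambda>\<omega>. h (Y \<omega>))"
  proof (rule Bochner_Integration.integrable_bound[OF Zint])
    show "AE \<omega> in N. norm (h (Y \<omega>)) \<le> norm (exp (lam * (Y \<omega> + \<kappa> / 2)))"
    proof (rule AE_I2)
      fix \<omega> assume "\<omega> \<in> space N"
      then have "Y \<omega> + \<kappa> / 2 \<ge> 0" using C2(4) C1(1) by auto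
      then have "r * (Y \<omega> + \<kappa> / 2) \<le> lam * (Y \<omega> + \<kappa> / 2)" using rl by (simp add: mult_right_mono)
      then show "norm (h (Y \<omega>)) \<le> norm (exp (lam * (Y \<omega> + \<kappa> / 2)))" unfolding h_def by simp
    qed
  qed simp
  have hD: "(\<integral>\<omega>. h (Y \<omega>) \<partial>N) \<le> Dc"
    unfolding Dc_def Dconst_def
  proof (rule integral_mono[OF ih Zint])
    fix \<omega> assume "\<omega> \<in> space N"
    then have "Y \<omega> + \<kappa> / 2 \<ge> 0" using C2(4) C1(1) by auto
    then have "r * (Y \<omega> + \<kappa> / 2) \<le> lam * (Y \<omega> + \<kappa> / 2)" using rl by (simp add: mult_right_mono)
    then show "h (Y \<omega>) \<le> exp (lam * (Y \<omega> + \<kappa> / 2))" unfolding h_def by simp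
  qed
  have dom: "(\<integral>\<omega>. W \<omega> * h (\<bar>phi (Suc t) \<omega> - phi t \<omega>\<bar> / \<alpha> t) \<partial>M) \<le> (\<integral>\<omega>. W \<omega> \<partial>M) * (\<integral>\<omega>. h (Y \<omega>) \<partial>N)"
  proof (rule dom_apply[OF Wm W0 Wb _ hm _ _ _ ih])
    show "(\<lambda>v. r * exp (r * (v + \<kappa> / 2))) \<in> borel_measurable borel" by measurable
    show "\<And>v. (h has_real_derivative r * exp (r * (v + \<kappa> / 2))) (at v)"
      unfolding h_def by (rule dexp_aff)
    show "\<And>v. 0 \<le> v \<Longrightarrow> 0 \<le> r * exp (r * (v + \<kappa> / 2))" using r0 by simp
    show "0 \<le> h 0" unfolding h_def by simp
  qed
  have iW: "integrable M W" by (rule bdd_int[where K=K]) (use W0 Wb in auto)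
  have Wnn: "(\<integral>\<omega>. W \<omega> \<partial>M) \<ge> 0" using W0 by simp
  have pw: "W \<omega> * exp (\<eta> * (phi (Suc t) \<omega> - phi t \<omega> + c)) \<le> W \<omega> * h (\<bar>phi (Suc t) \<omega> - phi t \<omega>\<bar> / \<alpha> t)"
    if w: "\<omega> \<in> space M" for \<omega>
  proof -
    define D where "D = phi (Suc t) \<omega> - phi t \<omega>"
    have "\<eta> * (D + c) \<le> \<eta> * \<bar>D\<bar> + \<eta> * c" using eta by (simp add: distrib_left mult_left_mono)
    also have "\<eta> * c \<le> \<eta> * (\<alpha> t * \<kappa> / 2)" using c1 eta by (simp add: mult_left_mono)
    also have "\<eta> * \<bar>D\<bar> + \<eta> * (\<alpha> t * \<kappa> / 2) = r * (\<bar>D\<bar> / \<alpha> t + \<kappa> / 2)"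
      unfolding r_def using ap by (simp add: field_simps)
    finally have "\<eta> * (D + c) \<le> r * (\<bar>D\<bar> / \<alpha> t + \<kappa> / 2)" by simp
    then have "exp (\<eta> * (D + c)) \<le> h (\<bar>D\<bar> / \<alpha> t)" unfolding h_def by simp
    then show ?thesis unfolding D_def using W0[OF w] by (simp add: mult_left_mono)
  qed
  have i1: "integrable M (\<lambda>\<omega>. W \<omega> * exp (\<eta> * (phi (Suc t) \<omega> - phi t \<omega> + c)))"
  proof (rule bdd_int[where K="K * exp (\<eta> * (Fc + c))"])
    fix \<omega> assume w: "\<omega> \<in> space M"
    have "\<eta> * (phi (Suc t) \<omega> - phi t \<omega> + c) \<le> \<eta> * (Fc + c)"
      using Delta_bound[OF w, of t] eta by (intro mult_left_mono) auto
    then have "exp (\<eta> * (phi (Suc t) \<omega> - phi t \<omega> + c)) \<le> exp (\<eta> * (Fc + c))" by simp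
    then show "\<bar>W \<omega> * exp (\<eta> * (phi (Suc t) \<omega> - phi t \<omega> + c))\<bar> \<le> K * exp (\<eta> * (Fc + c))"
      using W0[OF w] Wb[OF w] by (simp add: abs_mult mult_mono)
  qed simp
  have i2: "integrable M (\<lambda>\<omega>. W \<omega> * h (\<bar>phi (Suc t) \<omega> - phi t \<omega>\<bar> / \<alpha> t))"
  proof (rule bdd_int[where K="K * h (Fc / \<alpha> t)"])
    fix \<omega> assume w: "\<omega> \<in> space M"
    have "\<bar>phi (Suc t) \<omega> - phi t \<omega>\<bar> / \<alpha> t \<le> Fc / \<alpha> t"
      using Delta_bound[OF w, of t] ap by (simp add: divide_right_mono)
    then have "h (\<bar>phi (Suc t) \<omega> - phi t \<omega>\<bar> / \<alpha> t) \<le> h (Fc / \<alpha> t)"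
      unfolding h_def using r0 by simp
    then show "\<bar>W \<omega> * h (\<bar>phi (Suc t) \<omega> - phi t \<omega>\<bar> / \<alpha> t)\<bar> \<le> K * h (Fc / \<alpha> t)"
      using W0[OF w] Wb[OF w] unfolding h_def by (simp add: abs_mult mult_mono)
  qed simp
  have "(\<integral>\<omega>. W \<omega> * exp (\<eta> * (phi (Suc t) \<omega> - phi t \<omega> + c)) \<partial>M)
      \<le> (\<integral>\<omega>. W \<omega> * h (\<bar>phi (Suc t) \<omega> - phi t \<omega>\<bar> / \<alpha> t) \<partial>M)"
    by (rule integral_mono[OF i1 i2 pw])
  also have "\<dots> \<le> (\<integral>\<omega>. W \<omega> \<partial>M) * (\<integral>\<omega>. h (Y \<omega>) \<partial>N)" by (rule dom)
  also have "\<dots> \<le> (\<integral>\<omega>. W \<omega> \<partial>M) * Dc" using hD Wnn by (rule mult_left_mono)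
  finally show ?thesis unfolding c_def by (simp add: mult.commute)
qed

end


context setting begin

lemma partA:
  fixes W :: "'a \<Rightarrow> real"
  assumes t: "t \<ge> T0 \<alpha> \<kappa> B" and eta: "\<eta> > 0" "\<eta> * \<alpha> t \<le> Qc"
    and Wm: "W \<in> borel_measurable (Fs t)" and W0: "\<And>\<omega>. \<omega> \<in> space M \<Longrightarrow> 0 \<le> W \<omega>"
    and Wb: "\<And>\<omega>. \<omega> \<in> space M \<Longrightarrow> W \<omega> \<le> K"
    and Ws: "\<And>\<omega>. \<omega> \<in> space M \<Longrightarrow> W \<omega> \<noteq> 0 \<Longrightarrow> \<alpha> t * B \<le> phi t \<omega> - f xstar"
  shows "(\<integral>\<omega>. W \<omega> * exp (\<eta> * (phi (Suc t) \<omega> - phi t \<omega> + (\<alpha> t - \<alpha> (Suc t)) * B)) \<partial>M)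
     \<le> exp (- (\<eta> * \<alpha> t * \<kappa>)) * (\<integral>\<omega>. W \<omega> \<partial>M)"
proof -
  define c where "c = (\<alpha> t - \<alpha> (Suc t)) * B"
  define r where "r = \<eta> * \<alpha> t"
  define s where "s = r / lam"
  define hA where "hA = (\<lambda>v. exp (lam * (v + \<kappa> / 2)) - 1 - lam * (v + \<kappa> / 2))"
  define U where "U = (\<lambda>\<omega>. \<bar>phi (Suc t) \<omega> - phi t \<omega>\<bar> / \<alpha> t)"
  define Dl where "Dl = (\<lambda>\<omega>. phi (Suc t) \<omega> - phi t \<omega>)"
  have ap: "\<alpha> t > 0" by (rule alpha_pos)
  have c0: "0 \<le> c" and c1: "c \<le> \<alpha> t * \<kappa> / 2" unfolding c_def using c_nonneg T0_prop[OF t] by auto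
  have r0: "r > 0" unfolding r_def using eta ap by simp
  have rQ: "r \<le> Qc" unfolding r_def using eta by simp
  have rl: "r \<le> lam" using rQ Qc_le by simp
  have s0: "0 \<le> s" "s \<le> 1" unfolding s_def using r0 rl C2(1) by auto
  have sr: "s\<^sup>2 * lam\<^sup>2 = r\<^sup>2" unfolding s_def using C2(1) by (simp add: power_divide)
  have WM[measurable]: "W \<in> borel_measurable M" by (rule meas_from_F[OF Wm])
  have hAm[measurable]: "hA \<in> borel_measurable borel" unfolding hA_def by measurable
  have Um[measurable]: "U \<in> borel_measurable M" unfolding U_def by measurable
  have Dlm[measurable]: "Dl \<in> borel_measurable M" unfolding Dl_def by measurable
  have U0: "\<And>\<omega>. 0 \<le> U \<omega>" unfolding U_def using ap by simp
  have Ub: "\<And>\<omega>. \<omega> \<in> space M \<Longrightarrow> U \<omega> \<le> Fc / \<alpha> t"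
    unfolding U_def using Delta_bound ap by (simp add: divide_right_mono)
  have hA0: "\<And>v. 0 \<le> v \<Longrightarrow> 0 \<le> hA v" unfolding hA_def
    using exp_ge_add_one_self by (smt (verit))
  have hAmono: "\<And>a b. 0 \<le> a \<Longrightarrow> a \<le> b \<Longrightarrow> hA a \<le> hA b" unfolding hA_def
    using C2(1) C1(1) by (intro psi_mono) (auto intro: mult_left_mono)
  have ih: "integrable N (\<lambda>\<omega>. hA (Y \<omega>))" unfolding hA_def by (rule psiN_int)
  have hAint: "(\<integral>\<omega>. hA (Y \<omega>) \<partial>N) = lam\<^sup>2 * Ec"
    unfolding Ec_eq hA_def using C2(1) by simp
  have dom: "(\<integral>\<omega>. W \<omega> * hA (U \<omega>) \<partial>M) \<le> (\<integral>\<omega>. W \<omega> \<partial>M) * (\<integral>\<omega>. hA (Y \<omega>) \<partial>N)"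
    unfolding U_def
  proof (rule dom_apply[OF Wm W0 Wb _ hAm _ _ _ ih])
    show "(\<lambda>v. lam * (exp (lam * (v + \<kappa> / 2)) - 1)) \<in> borel_measurable borel" by measurable
    show "\<And>v. (hA has_real_derivative lam * (exp (lam * (v + \<kappa> / 2)) - 1)) (at v)"
      unfolding hA_def by (rule dpsi_aff)
    show "\<And>v. 0 \<le> v \<Longrightarrow> 0 \<le> lam * (exp (lam * (v + \<kappa> / 2)) - 1)" using C2(1) C1(1) by simp
    show "0 \<le> hA 0" by (rule hA0) simp
  qed
  have iW: "integrable M W" by (rule bdd_int[where K=K]) (use W0 Wb in auto)
  have Wnn: "(\<integral>\<omega>. W \<omega> \<partial>M) \<ge> 0" using W0 by simp
  have iWD: "integrable M (\<lambda>\<omega>. W \<omega> * Dl \<omega>)"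
  proof (rule bdd_int[where K="K * Fc"])
    fix \<omega> assume w: "\<omega> \<in> space M"
    show "\<bar>W \<omega> * Dl \<omega>\<bar> \<le> K * Fc" unfolding Dl_def
      using W0[OF w] Wb[OF w] Delta_bound[OF w, of t] by (simp add: abs_mult mult_mono)
  qed simp
  have iWh: "integrable M (\<lambda>\<omega>. W \<omega> * hA (U \<omega>))"
  proof (rule bdd_int[where K="K * hA (Fc / \<alpha> t)"])
    fix \<omega> assume w: "\<omega> \<in> space M"
    show "\<bar>W \<omega> * hA (U \<omega>)\<bar> \<le> K * hA (Fc / \<alpha> t)"
      using W0[OF w] Wb[OF w] hA0[OF U0] hAmono[OF U0 Ub[OF w]] by (simp add: abs_mult mult_mono)
  qed simp
  have i1: "integrable M (\<lambda>\<omega>. W \<omega> * exp (\<eta> * (Dl \<omega> + c)))"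
  proof (rule bdd_int[where K="K * exp (\<eta> * (Fc + c))"])
    fix \<omega> assume w: "\<omega> \<in> space M"
    have "\<eta> * (Dl \<omega> + c) \<le> \<eta> * (Fc + c)"
      unfolding Dl_def using Delta_bound[OF w, of t] eta by (intro mult_left_mono) auto
    then have "exp (\<eta> * (Dl \<omega> + c)) \<le> exp (\<eta> * (Fc + c))" by simp
    then show "\<bar>W \<omega> * exp (\<eta> * (Dl \<omega> + c))\<bar> \<le> K * exp (\<eta> * (Fc + c))"
      using W0[OF w] Wb[OF w] by (simp add: abs_mult mult_mono)
  qed simp
  define g2 where "g2 = (\<lambda>\<omega>. W \<omega> + \<eta> * (W \<omega> * Dl \<omega>) + (\<eta> * c) * W \<omega> + s\<^sup>2 * (W \<omega> * hA (U \<omega>)))"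
  have i2: "integrable M g2" unfolding g2_def using iW iWD iWh by simp
  have pw: "W \<omega> * exp (\<eta> * (Dl \<omega> + c)) \<le> g2 \<omega>" if w: "\<omega> \<in> space M" for \<omega>
  proof -
    define u where "u = \<eta> * (Dl \<omega> + c)"
    have "\<bar>u\<bar> \<le> \<eta> * (\<bar>Dl \<omega>\<bar> + c)" unfolding u_def using eta c0 by (simp add: abs_mult)
    also have "\<dots> \<le> \<eta> * (\<bar>Dl \<omega>\<bar> + \<alpha> t * \<kappa> / 2)" using eta c1 by (simp add: mult_left_mono)
    also have "\<dots> = s * (lam * (U \<omega> + \<kappa> / 2))"
      unfolding s_def r_def U_def Dl_def using ap C2(1) by (simp add: field_simps)
    finally have ub: "\<bar>u\<bar> \<le> s * (lam * (U \<omega> + \<kappa> / 2))" .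
    have v0: "0 \<le> lam * (U \<omega> + \<kappa> / 2)" using U0 C2(1) C1(1) by simp
    have "exp u - 1 - u \<le> exp \<bar>u\<bar> - 1 - \<bar>u\<bar>" by (rule psi_abs)
    also have "\<dots> \<le> exp (s * (lam * (U \<omega> + \<kappa> / 2))) - 1 - s * (lam * (U \<omega> + \<kappa> / 2))"
      by (rule psi_mono[OF _ ub]) simp
    also have "\<dots> \<le> s\<^sup>2 * hA (U \<omega>)" unfolding hA_def by (rule psi_scale[OF s0 v0])
    finally have "exp u \<le> 1 + u + s\<^sup>2 * hA (U \<omega>)" by simp
    then have "W \<omega> * exp u \<le> W \<omega> * (1 + u + s\<^sup>2 * hA (U \<omega>))" using W0[OF w] by (rule mult_left_mono)
    then show ?thesis unfolding g2_def u_def by (simp add: algebra_simps)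
  qed
  define I where "I = (\<integral>\<omega>. W \<omega> \<partial>M)"
  have C1t: "(\<integral>\<omega>. W \<omega> * Dl \<omega> \<partial>M) \<le> - 2 * \<alpha> t * \<kappa> * I"
    unfolding Dl_def I_def by (rule C1_transfer[OF Wm W0 Wb Ws])
  have "(\<integral>\<omega>. W \<omega> * exp (\<eta> * (Dl \<omega> + c)) \<partial>M) \<le> integral\<^sup>L M g2"
    by (rule integral_mono[OF i1 i2 pw])
  also have "integral\<^sup>L M g2 = I + \<eta> * (\<integral>\<omega>. W \<omega> * Dl \<omega> \<partial>M) + (\<eta> * c) * I + s\<^sup>2 * (\<integral>\<omega>. W \<omega> * hA (U \<omega>) \<partial>M)"
    unfolding g2_def I_def using iW iWD iWh by simp
  also have "\<dots> \<le> I + \<eta> * (- 2 * \<alpha> t * \<kappa> * I) + (r * \<kappa> / 2) * I + s\<^sup>2 * (I * (lam\<^sup>2 * Ec))"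
  proof -
    have a: "\<eta> * (\<integral>\<omega>. W \<omega> * Dl \<omega> \<partial>M) \<le> \<eta> * (- 2 * \<alpha> t * \<kappa> * I)"
      using mult_left_mono[OF C1t, of \<eta>] eta by simp
    have "\<eta> * c \<le> r * \<kappa> / 2" unfolding r_def using c1 eta mult_left_mono[OF c1, of \<eta>] by simp
    then have b: "(\<eta> * c) * I \<le> (r * \<kappa> / 2) * I" using Wnn unfolding I_def by (rule mult_right_mono)
    have "(\<integral>\<omega>. W \<omega> * hA (U \<omega>) \<partial>M) \<le> I * (lam\<^sup>2 * Ec)" using dom hAint unfolding I_def by simp
    then have d: "s\<^sup>2 * (\<integral>\<omega>. W \<omega> * hA (U \<omega>) \<partial>M) \<le> s\<^sup>2 * (I * (lam\<^sup>2 * Ec))" by (simp add: mult_left_mono)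
    show ?thesis using a b d by simp
  qed
  also have "\<dots> = I * (1 - 2 * r * \<kappa> + r * \<kappa> / 2 + r * (r * Ec))"
    unfolding r_def using sr unfolding r_def by (simp add: algebra_simps power2_eq_square)
  also have "\<dots> \<le> I * (1 - r * \<kappa>)"
  proof -
    have "r * Ec \<le> Qc * Ec" using rQ Ec_gt0 by (simp add: mult_right_mono)
    then have "r * Ec \<le> \<kappa> / 2" using QcEc by simp
    then have "r * (r * Ec) \<le> r * (\<kappa> / 2)" using r0 by (simp add: mult_left_mono)
    then have "1 - 2 * r * \<kappa> + r * \<kappa> / 2 + r * (r * Ec) \<le> 1 - r * \<kappa>" by linarith
    then show ?thesis unfolding I_def using Wnn by (rule mult_left_mono)
  qed
  also have "\<dots> \<le> I * exp (- (r * \<kappa>))"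
    using exp_ge_add_one_self[of "- (r * \<kappa>)"] Wnn unfolding I_def by (intro mult_left_mono) auto
  finally show ?thesis unfolding Dl_def c_def I_def r_def by (simp add: mult.commute)
qed

end


context setting begin

definition "Lf t \<omega> = phi t \<omega> - f xstar - \<alpha> t * B"

lemma Lf_meas_F[measurable]: "Lf t \<in> borel_measurable (Fs t)"
  unfolding Lf_def by measurable

lemma Lf_meas[measurable]: "Lf t \<in> borel_measurable M"
  unfolding Lf_def by measurable

lemma Lf_le: "\<omega> \<in> space M \<Longrightarrow> Lf t \<omega> \<le> Fc"
  unfolding Lf_def using phi_bounds[of \<omega> t] alpha_pos[of t] C1(2) by (smt (verit) mult_pos_pos)

lemma expL_int: assumes "\<eta> \<ge> 0" shows "integrable M (\<lambda>\<omega>. exp (\<eta> * Lf t \<omega>))"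
proof (rule bdd_int[where K="exp (\<eta> * Fc)"])
  fix \<omega> assume w: "\<omega> \<in> space M"
  have "\<eta> * Lf t \<omega> \<le> \<eta> * Fc" using Lf_le[OF w] assms by (rule mult_left_mono)
  then show "\<bar>exp (\<eta> * Lf t \<omega>)\<bar> \<le> exp (\<eta> * Fc)" by simp
qed simp

lemma one_step:
  assumes t: "t \<ge> T0 \<alpha> \<kappa> B" and eta: "\<eta> > 0" "\<eta> * \<alpha> t \<le> Qc"
  shows "(\<integral>\<omega>. exp (\<eta> * Lf (Suc t) \<omega>) \<partial>M) \<le> exp (- (\<eta> * \<alpha> t * \<kappa>)) * (\<integral>\<omega>. exp (\<eta> * Lf t \<omega>) \<partial>M) + Dc"
proof -
  define c where "c = (\<alpha> t - \<alpha> (Suc t)) * B"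
  define E where "E = (\<lambda>\<omega>. exp (\<eta> * (phi (Suc t) \<omega> - phi t \<omega> + c)))"
  define W1 where "W1 = (\<lambda>\<omega>. exp (\<eta> * Lf t \<omega>) * (if 0 \<le> Lf t \<omega> then 1 else 0))"
  define W2 where "W2 = (\<lambda>\<omega>. exp (\<eta> * Lf t \<omega>) * (if 0 \<le> Lf t \<omega> then 0 else 1))"
  have W1m[measurable]: "W1 \<in> borel_measurable (Fs t)" unfolding W1_def by measurable
  have W2m[measurable]: "W2 \<in> borel_measurable (Fs t)" unfolding W2_def by measurable
  have W1M[measurable]: "W1 \<in> borel_measurable M" by (rule meas_from_F[OF W1m])
  have W2M[measurable]: "W2 \<in> borel_measurable M" by (rule meas_from_F[OF W2m])
  have Em[measurable]: "E \<in> borel_measurable M" unfolding E_def by measurable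
  have W10: "\<And>\<omega>. 0 \<le> W1 \<omega>" and W20: "\<And>\<omega>. 0 \<le> W2 \<omega>" unfolding W1_def W2_def by auto
  have W1b: "\<And>\<omega>. \<omega> \<in> space M \<Longrightarrow> W1 \<omega> \<le> exp (\<eta> * Fc)"
  proof -
    fix \<omega> assume w: "\<omega> \<in> space M"
    have "\<eta> * Lf t \<omega> \<le> \<eta> * Fc" using Lf_le[OF w] eta by (simp add: mult_left_mono)
    then show "W1 \<omega> \<le> exp (\<eta> * Fc)" unfolding W1_def by auto
  qed
  have W2b: "\<And>\<omega>. W2 \<omega> \<le> 1"
  proof -
    fix \<omega>
    show "W2 \<omega> \<le> 1"
    proof (cases "0 \<le> Lf t \<omega>")
      case False
      then have "\<eta> * Lf t \<omega> \<le> 0" using eta(1) by (simp add: mult_nonneg_nonpos)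
      then show ?thesis unfolding W2_def using False by simp
    qed (simp add: W2_def)
  qed
  have Ws: "\<And>\<omega>. \<omega> \<in> space M \<Longrightarrow> W1 \<omega> \<noteq> 0 \<Longrightarrow> \<alpha> t * B \<le> phi t \<omega> - f xstar"
    unfolding W1_def Lf_def by (auto split: if_splits)
  have ap: "\<alpha> t > 0" by (rule alpha_pos)
  have Eb: "\<And>\<omega>. \<omega> \<in> space M \<Longrightarrow> E \<omega> \<le> exp (\<eta> * (Fc + c))"
  proof -
    fix \<omega> assume w: "\<omega> \<in> space M"
    have "\<eta> * (phi (Suc t) \<omega> - phi t \<omega> + c) \<le> \<eta> * (Fc + c)"
      using Delta_bound[OF w, of t] eta by (intro mult_left_mono) auto
    then show "E \<omega> \<le> exp (\<eta> * (Fc + c))" unfolding E_def by simp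
  qed
  have iWE1: "integrable M (\<lambda>\<omega>. W1 \<omega> * E \<omega>)"
  proof (rule bdd_int[where K="exp (\<eta> * Fc) * exp (\<eta> * (Fc + c))"])
    fix \<omega> assume w: "\<omega> \<in> space M"
    show "\<bar>W1 \<omega> * E \<omega>\<bar> \<le> exp (\<eta> * Fc) * exp (\<eta> * (Fc + c))"
      using W10[of \<omega>] W1b[OF w] Eb[OF w] by (simp add: abs_mult E_def mult_mono)
  qed simp
  have iWE2: "integrable M (\<lambda>\<omega>. W2 \<omega> * E \<omega>)"
  proof (rule bdd_int[where K="exp (\<eta> * (Fc + c))"])
    fix \<omega> assume w: "\<omega> \<in> space M"
    have "W2 \<omega> * E \<omega> \<le> 1 * exp (\<eta> * (Fc + c))"
      using W20[of \<omega>] W2b[of \<omega>] Eb[OF w] by (intro mult_mono) (auto simp: E_def)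
    then show "\<bar>W2 \<omega> * E \<omega>\<bar> \<le> exp (\<eta> * (Fc + c))" using W20[of \<omega>] by (simp add: E_def)
  qed simp
  have split: "exp (\<eta> * Lf (Suc t) \<omega>) = W1 \<omega> * E \<omega> + W2 \<omega> * E \<omega>" for \<omega>
  proof -
    have "\<eta> * Lf (Suc t) \<omega> = \<eta> * Lf t \<omega> + \<eta> * (phi (Suc t) \<omega> - phi t \<omega> + c)"
      unfolding Lf_def c_def by (simp add: algebra_simps)
    then have "exp (\<eta> * Lf (Suc t) \<omega>) = exp (\<eta> * Lf t \<omega>) * E \<omega>" unfolding E_def by (simp add: exp_add)
    then show ?thesis unfolding W1_def W2_def by (simp add: algebra_simps)
  qed
  have "(\<integral>\<omega>. exp (\<eta> * Lf (Suc t) \<omega>) \<partial>M) = (\<integral>\<omega>. W1 \<omega> * E \<omega> \<partial>M) + (\<integral>\<omega>. W2 \<omega> * E \<omega> \<partial>M)"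
    unfolding split using iWE1 iWE2 by simp
  also have "(\<integral>\<omega>. W1 \<omega> * E \<omega> \<partial>M) \<le> exp (- (\<eta> * \<alpha> t * \<kappa>)) * (\<integral>\<omega>. W1 \<omega> \<partial>M)"
    unfolding E_def c_def by (rule partA[OF t eta W1m _ W1b Ws]) (simp add: W10)
  also have "(\<integral>\<omega>. W2 \<omega> * E \<omega> \<partial>M) \<le> Dc * (\<integral>\<omega>. W2 \<omega> \<partial>M)"
    unfolding E_def c_def
    by (rule partB[OF t eta(1) _ W2m _ W2b]) (use eta Qc_le in \<open>auto simp: W20\<close>)
  also have "exp (- (\<eta> * \<alpha> t * \<kappa>)) * (\<integral>\<omega>. W1 \<omega> \<partial>M) + Dc * (\<integral>\<omega>. W2 \<omega> \<partial>M)
      \<le> exp (- (\<eta> * \<alpha> t * \<kappa>)) * (\<integral>\<omega>. exp (\<eta> * Lf t \<omega>) \<partial>M) + Dc"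
  proof -
    have iW1: "integrable M W1" by (rule bdd_int[where K="exp (\<eta> * Fc)"]) (use W10 W1b in auto)
    have iW2: "integrable M W2" by (rule bdd_int[where K=1]) (use W20 W2b in auto)
    have "(\<integral>\<omega>. W1 \<omega> \<partial>M) \<le> (\<integral>\<omega>. exp (\<eta> * Lf t \<omega>) \<partial>M)"
      by (rule integral_mono[OF iW1 expL_int]) (use eta in \<open>auto simp: W1_def\<close>)
    then have a: "exp (- (\<eta> * \<alpha> t * \<kappa>)) * (\<integral>\<omega>. W1 \<omega> \<partial>M) \<le> exp (- (\<eta> * \<alpha> t * \<kappa>)) * (\<integral>\<omega>. exp (\<eta> * Lf t \<omega>) \<partial>M)"
      by (rule mult_left_mono) simp
    have "(\<integral>\<omega>. W2 \<omega> \<partial>M) \<le> (\<integral>\<omega>. 1 \<partial>M)"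
      by (rule integral_mono[OF iW2]) (use W2b in auto)
    then have "(\<integral>\<omega>. W2 \<omega> \<partial>M) \<le> 1" by (simp add: M.prob_space)
    then have b: "Dc * (\<integral>\<omega>. W2 \<omega> \<partial>M) \<le> Dc" using Dc_ge1 mult_left_mono[of _ 1 Dc] by simp
    show ?thesis using a b by linarith
  qed
  finally show ?thesis by simp
qed

end


context setting begin

lemma alpha_half: "t div 2 ^ n \<ge> 1 \<Longrightarrow> \<alpha> t \<ge> sqrt G ^ n * \<alpha> (t div 2 ^ n)"
proof (induction n)
  case 0 then show ?case by simp
next
  case (Suc n)
  have "t div 2 ^ Suc n \<le> t div 2 ^ n" by (simp add: div_le_mono2)
  then have h1: "t div 2 ^ n \<ge> 1" using Suc.prems by simp
  have eq: "t div 2 ^ n div 2 = t div 2 ^ Suc n" by (metis div_mult2_eq power_Suc2)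
  have "sqrt G * \<alpha> (t div 2 ^ n div 2) \<le> \<alpha> (t div 2 ^ n)" using G(3) h1 by auto
  then have "sqrt G ^ n * (sqrt G * \<alpha> (t div 2 ^ Suc n)) \<le> sqrt G ^ n * \<alpha> (t div 2 ^ n)"
    using eq G(1) by (intro mult_left_mono) auto
  also have "\<dots> \<le> \<alpha> t" using Suc.IH[OF h1] .
  finally show ?case by (simp add: mult_ac)
qed

lemma G_le_sqrt: "G ^ n \<le> sqrt G ^ n"
proof -
  have "sqrt G \<le> 1" using G by simp
  have "G = sqrt G * sqrt G" using G(1) by simp
  also have "\<dots> \<le> sqrt G * 1" using \<open>sqrt G \<le> 1\<close> G(1) by (intro mult_left_mono) auto
  finally have "G \<le> sqrt G" by simp
  then show ?thesis using G(1) by (intro power_mono) (auto simp: less_eq_real_def)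
qed

lemma H_bound: fixes a D :: real assumes "a > 0" "D \<ge> 0"
  shows "D / (1 - exp (- a)) \<le> D * exp (a / 2) / (1 - exp (- (a / 2)))"
proof -
  define b where "b = exp (- (a / 2))"
  have b: "0 < b" "b < 1" unfolding b_def using assms by auto
  have eq: "exp (- a) = b * b" unfolding b_def by (simp add: exp_add[symmetric])
  have "b * b \<le> b * 1" using b by (intro mult_left_mono) auto
  then have bb: "1 - b \<le> 1 - b * b" by simp
  have p1: "0 < 1 - b" using b by simp
  have p2: "0 < 1 - b * b" using bb p1 by linarith
  have "D / (1 - b * b) \<le> D / (1 - b)"
    by (rule divide_left_mono[OF bb assms(2)]) (use p1 p2 in simp)
  also have "\<dots> \<le> D * exp (a / 2) / (1 - b)"
    using b assms p1 by (intro divide_right_mono) (auto intro: mult_left_le_one_le simp: mult_le_cancel_left1)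
  finally show ?thesis unfolding eq b_def .
qed

lemma mgf_bound:
  assumes tn: "t div 2 ^ n \<ge> max (T0 \<alpha> \<kappa> B) 1"
  defines "\<eta> \<equiv> Qc * G ^ n / \<alpha> t"
  shows "(\<integral>\<omega>. exp (\<eta> * Lf (Suc t) \<omega>) \<partial>M)
     \<le> exp (- \<eta> * (- Fc - \<alpha> 0 * B + \<kappa> / 2 * (\<Sum>s\<in>{t div 2 ^ n..t}. \<alpha> s))) + Hconst N Y lam \<kappa> G n"
proof -
  define s0 where "s0 = t div 2 ^ n"
  define q where "q = exp (- (\<kappa> * Qc * G ^ n))"
  define m where "m = (\<lambda>s. (\<integral>\<omega>. exp (\<eta> * Lf s \<omega>) \<partial>M))"
  have s0t: "s0 \<le> t" unfolding s0_def by (metis div_le_dividend)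
  have s0T: "s0 \<ge> T0 \<alpha> \<kappa> B" "s0 \<ge> 1" using tn unfolding s0_def by auto
  have apt: "\<alpha> t > 0" by (rule alpha_pos)
  have Gn: "G ^ n > 0" using G(1) by simp
  have eta0: "\<eta> > 0" unfolding \<eta>_def using Qc_pos Gn apt by simp
  have a0: "\<kappa> * Qc * G ^ n > 0" using C1(1) Qc_pos Gn by simp
  have q: "0 < q" "q < 1" unfolding q_def using a0 by auto
  have ah: "\<alpha> t \<ge> sqrt G ^ n * \<alpha> s0" unfolding s0_def by (rule alpha_half) (use s0T in \<open>simp add: s0_def\<close>)
  have etaQ: "\<eta> * \<alpha> s \<le> Qc" if "s0 \<le> s" for s
  proof -
    have "\<alpha> s \<le> \<alpha> s0" using alpha_dec that by (simp add: decseq_def)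
    then have "G ^ n * \<alpha> s \<le> sqrt G ^ n * \<alpha> s0"
      using G_le_sqrt alpha_pos[of s] Gn G(1) by (intro mult_mono) auto
    also have "\<dots> \<le> \<alpha> t" by (rule ah)
    finally have "G ^ n * \<alpha> s / \<alpha> t \<le> 1" using apt by simp
    then have "Qc * (G ^ n * \<alpha> s / \<alpha> t) \<le> Qc * 1" using Qc_pos by (intro mult_left_mono) auto
    then show ?thesis unfolding \<eta>_def by (simp add: field_simps)
  qed
  have etaq: "exp (- (\<eta> * \<alpha> s * \<kappa>)) \<le> q" if "s \<le> t" for s
  proof -
    have "\<alpha> t \<le> \<alpha> s" using alpha_dec that by (simp add: decseq_def)
    then have "\<eta> * \<alpha> t \<le> \<eta> * \<alpha> s" using eta0 by simp
    moreover have "\<eta> * \<alpha> t = Qc * G ^ n" unfolding \<eta>_def using apt by simp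
    ultimately have "\<kappa> * Qc * G ^ n \<le> \<eta> * \<alpha> s * \<kappa>" using C1(1) by (simp add: mult.commute mult.left_commute)
    then show ?thesis unfolding q_def by simp
  qed
  have Dq: "Dc / (1 - q) \<ge> 0" using Dc_ge1 q by simp
  have rec: "m (s0 + k) \<le> exp (- (\<kappa> * \<eta> * (\<Sum>j\<in>{s0..<s0 + k}. \<alpha> j))) * m s0 + Dc / (1 - q)"
    if "k \<le> t + 1 - s0" for k
    using that
  proof (induction k)
    case 0 then show ?case using Dq by simp
  next
    case (Suc k)
    define s where "s = s0 + k"
    define S where "S = (\<Sum>j\<in>{s0..<s0 + k}. \<alpha> j)"
    have st: "s \<le> t" using Suc.prems s0t unfolding s_def by simp
    have sT: "s \<ge> T0 \<alpha> \<kappa> B" using s0T unfolding s_def by simp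
    have IH: "m s \<le> exp (- (\<kappa> * \<eta> * S)) * m s0 + Dc / (1 - q)"
      using Suc unfolding s_def S_def by simp
    have step: "m (Suc s) \<le> exp (- (\<eta> * \<alpha> s * \<kappa>)) * m s + Dc"
      unfolding m_def by (rule one_step[OF sT eta0 etaQ]) (simp add: s_def)
    have e0: "exp (- (\<eta> * \<alpha> s * \<kappa>)) \<ge> 0" by simp
    have ee: "exp (- (\<eta> * \<alpha> s * \<kappa>)) * exp (- (\<kappa> * \<eta> * S)) = exp (- (\<kappa> * \<eta> * (S + \<alpha> s)))"
      by (simp only: mult_exp_exp) (simp add: algebra_simps)
    have c1: "m (Suc s) \<le> exp (- (\<eta> * \<alpha> s * \<kappa>)) * (exp (- (\<kappa> * \<eta> * S)) * m s0 + Dc / (1 - q)) + Dc"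
      using step mult_left_mono[OF IH e0] by linarith
    have c2: "exp (- (\<eta> * \<alpha> s * \<kappa>)) * (exp (- (\<kappa> * \<eta> * S)) * m s0 + Dc / (1 - q)) + Dc
       = exp (- (\<kappa> * \<eta> * (S + \<alpha> s))) * m s0 + exp (- (\<eta> * \<alpha> s * \<kappa>)) * (Dc / (1 - q)) + Dc"
      by (simp only: distrib_left mult.assoc[symmetric] ee)
    have c3: "exp (- (\<eta> * \<alpha> s * \<kappa>)) * (Dc / (1 - q)) \<le> q * (Dc / (1 - q))"
      using etaq[OF st] Dq by (rule mult_right_mono)
    have c4: "q * (Dc / (1 - q)) + Dc = Dc / (1 - q)" using q by (simp add: field_simps)
    have "m (Suc s) \<le> exp (- (\<kappa> * \<eta> * (S + \<alpha> s))) * m s0 + Dc / (1 - q)"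
      using c1 c2 c3 c4 by linarith
    moreover have "S + \<alpha> s = (\<Sum>j\<in>{s0..<s0 + Suc k}. \<alpha> j)" unfolding S_def s_def by simp
    ultimately show ?case unfolding s_def by simp
  qed
  have "m (s0 + (t + 1 - s0)) \<le> exp (- (\<kappa> * \<eta> * (\<Sum>j\<in>{s0..<s0 + (t + 1 - s0)}. \<alpha> j))) * m s0 + Dc / (1 - q)"
    by (rule rec) simp
  moreover have "s0 + (t + 1 - s0) = Suc t" using s0t by simp
  ultimately have r1: "m (Suc t) \<le> exp (- (\<kappa> * \<eta> * (\<Sum>j\<in>{s0..t}. \<alpha> j))) * m s0 + Dc / (1 - q)"
    by (simp add: atLeastLessThanSuc_atLeastAtMost)
  define Sg where "Sg = (\<Sum>j\<in>{s0..t}. \<alpha> j)"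
  have Sg0: "Sg \<ge> 0" unfolding Sg_def using alpha_pos by (intro sum_nonneg) (simp add: less_eq_real_def)
  have m0: "m s0 \<le> exp (\<eta> * Fc)"
  proof -
    have "m s0 \<le> (\<integral>\<omega>. exp (\<eta> * Fc) \<partial>M)" unfolding m_def
    proof (rule integral_mono[OF expL_int])
      fix \<omega> assume w: "\<omega> \<in> space M"
      show "exp (\<eta> * Lf s0 \<omega>) \<le> exp (\<eta> * Fc)" using Lf_le[OF w] eta0 by simp
    qed (use eta0 in auto)
    then show ?thesis by (simp add: M.prob_space)
  qed
  have "exp (- (\<kappa> * \<eta> * Sg)) * m s0 \<le> exp (- (\<kappa> * \<eta> * Sg)) * exp (\<eta> * Fc)"
    using m0 by (rule mult_left_mono) simp
  also have "\<dots> = exp (- (\<kappa> * \<eta> * Sg) + \<eta> * Fc)" by (simp only: mult_exp_exp)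
  also have "\<dots> \<le> exp (- \<eta> * (- Fc - \<alpha> 0 * B + \<kappa> / 2 * Sg))"
  proof -
    have "0 \<le> \<eta> * (\<kappa> / 2 * Sg)" using eta0 C1(1) Sg0 by simp
    moreover have "0 \<le> \<eta> * (\<alpha> 0 * B)" using eta0 alpha_pos[of 0] C1(2) by simp
    ultimately show ?thesis by (simp add: algebra_simps)
  qed
  finally have t1: "exp (- (\<kappa> * \<eta> * Sg)) * m s0 \<le> exp (- \<eta> * (- Fc - \<alpha> 0 * B + \<kappa> / 2 * Sg))" .
  have t2: "Dc / (1 - q) \<le> Hconst N Y lam \<kappa> G n"
    unfolding Hconst_def Qc_def[symmetric] Dc_def[symmetric] q_def
    using H_bound[OF a0, of Dc] Dc_ge1 by (simp add: mult.assoc)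
  show ?thesis using r1 t1 t2 unfolding m_def Sg_def s0_def by linarith
qed

end


context setting begin

lemma final:
  "\<forall>n::nat. \<forall>t::nat. t div 2 ^ n \<ge> max (T0 \<alpha> \<kappa> B) 1 \<longrightarrow>
           (\<forall>z\<ge>0. measure M {\<omega>\<in>space M. Lf (Suc t) \<omega> \<ge> z}
              \<le> exp (- (Qc * G ^ n / \<alpha> t) *
                     (z - Fc - \<alpha> 0 * B + \<kappa> / 2 * (\<Sum>s\<in>{t div 2 ^ n..t}. \<alpha> s)))
                + Hconst N Y lam \<kappa> G n * exp (- (Qc * G ^ n / \<alpha> t) * z))
           \<and> (\<kappa> / 2 * (\<Sum>s\<in>{t div 2 ^ n..t}. \<alpha> s) \<ge> Fc + \<alpha> 0 * B \<longrightarrow>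
              integral\<^sup>L M (Lf (Suc t)) \<le> (1 + Hconst N Y lam \<kappa> G n) / (Qc * G ^ n) * \<alpha> t)"
proof (intro allI impI, rule conjI)
  fix n t :: nat
  assume tn: "t div 2 ^ n \<ge> max (T0 \<alpha> \<kappa> B) 1"
  define \<eta> where "\<eta> = Qc * G ^ n / \<alpha> t"
  define A where "A = - Fc - \<alpha> 0 * B + \<kappa> / 2 * (\<Sum>s\<in>{t div 2 ^ n..t}. \<alpha> s)"
  define H where "H = Hconst N Y lam \<kappa> G n"
  define m where "m = (\<integral>\<omega>. exp (\<eta> * Lf (Suc t) \<omega>) \<partial>M)"
  have apt: "\<alpha> t > 0" by (rule alpha_pos)
  have Gn: "G ^ n > 0" using G(1) by simp
  have eta0: "\<eta> > 0" unfolding \<eta>_def using Qc_pos Gn apt by simp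
  have mb: "m \<le> exp (- \<eta> * A) + H"
    unfolding m_def A_def H_def \<eta>_def by (rule mgf_bound[OF tn])
  have ie: "integrable M (\<lambda>\<omega>. exp (\<eta> * Lf (Suc t) \<omega>))" using eta0 by (intro expL_int) simp
  show "\<forall>z\<ge>0. measure M {\<omega>\<in>space M. Lf (Suc t) \<omega> \<ge> z}
              \<le> exp (- (Qc * G ^ n / \<alpha> t) *
                     (z - Fc - \<alpha> 0 * B + \<kappa> / 2 * (\<Sum>s\<in>{t div 2 ^ n..t}. \<alpha> s)))
                + Hconst N Y lam \<kappa> G n * exp (- (Qc * G ^ n / \<alpha> t) * z)"
  proof (intro allI impI)
    fix z :: real assume z: "z \<ge> 0"
    define S where "S = {\<omega>\<in>space M. Lf (Suc t) \<omega> \<ge> z}"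
    have Sm: "S \<in> sets M" unfolding S_def by measurable
    have "measure M S = (\<integral>\<omega>. indicator S \<omega> \<partial>M)" using Sm by simp
    also have "\<dots> \<le> (\<integral>\<omega>. exp (- \<eta> * z) * exp (\<eta> * Lf (Suc t) \<omega>) \<partial>M)"
    proof (rule integral_mono)
      show "integrable M (indicator S :: 'a \<Rightarrow> real)" by (rule bdd_int[where K=1]) (use Sm in \<open>auto simp: indicator_def\<close>)
      show "integrable M (\<lambda>\<omega>. exp (- \<eta> * z) * exp (\<eta> * Lf (Suc t) \<omega>))" using ie by simp
      fix \<omega> assume w: "\<omega> \<in> space M"
      show "indicator S \<omega> \<le> exp (- \<eta> * z) * exp (\<eta> * Lf (Suc t) \<omega>)"
      proof (cases "\<omega> \<in> S")
        case True
        then have "z \<le> Lf (Suc t) \<omega>" unfolding S_def by simp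
        then have "0 \<le> - \<eta> * z + \<eta> * Lf (Suc t) \<omega>" using eta0
          by (simp add: mult_left_mono algebra_simps)
        then have "1 \<le> exp (- \<eta> * z + \<eta> * Lf (Suc t) \<omega>)" by simp
        then show ?thesis using True by (simp add: mult_exp_exp)
      qed simp
    qed
    also have "\<dots> = exp (- \<eta> * z) * m" unfolding m_def by simp
    also have "\<dots> \<le> exp (- \<eta> * z) * (exp (- \<eta> * A) + H)" using mb by (rule mult_left_mono) simp
    also have "\<dots> = exp (- \<eta> * (z + A)) + H * exp (- \<eta> * z)"
      by (simp add: distrib_left mult_exp_exp algebra_simps)
    finally show "measure M {\<omega>\<in>space M. Lf (Suc t) \<omega> \<ge> z}
              \<le> exp (- (Qc * G ^ n / \<alpha> t) *
                     (z - Fc - \<alpha> 0 * B + \<kappa> / 2 * (\<Sum>s\<in>{t div 2 ^ n..t}. \<alpha> s)))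
                + Hconst N Y lam \<kappa> G n * exp (- (Qc * G ^ n / \<alpha> t) * z)"
      unfolding S_def A_def H_def \<eta>_def by (simp add: algebra_simps)
  qed
  show "\<kappa> / 2 * (\<Sum>s\<in>{t div 2 ^ n..t}. \<alpha> s) \<ge> Fc + \<alpha> 0 * B \<longrightarrow>
      integral\<^sup>L M (Lf (Suc t)) \<le> (1 + Hconst N Y lam \<kappa> G n) / (Qc * G ^ n) * \<alpha> t"
  proof
  assume big: "\<kappa> / 2 * (\<Sum>s\<in>{t div 2 ^ n..t}. \<alpha> s) \<ge> Fc + \<alpha> 0 * B"
  have A0: "A \<ge> 0" unfolding A_def using big by simp
  have e1: "exp (- \<eta> * A) \<le> 1" using A0 eta0 by (simp add: mult_nonneg_nonneg)
  from mb e1 have m1: "m \<le> 1 + H" by linarith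
  have iL: "integrable M (Lf (Suc t))"
  proof (rule bdd_int[where K="Fc + \<alpha> (Suc t) * B"])
    fix \<omega> assume w: "\<omega> \<in> space M"
    show "\<bar>Lf (Suc t) \<omega>\<bar> \<le> Fc + \<alpha> (Suc t) * B"
    proof -
      have "0 \<le> \<alpha> (Suc t) * B" using alpha_pos[of "Suc t"] C1(2) by simp
      then show ?thesis using Lf_le[OF w, of "Suc t"] phi_bounds(1)[OF w, of "Suc t"] Fc_nonneg
        unfolding Lf_def abs_le_iff by (intro conjI; linarith)
    qed
  qed simp
  have "integral\<^sup>L M (Lf (Suc t)) \<le> (\<integral>\<omega>. exp (\<eta> * Lf (Suc t) \<omega>) / \<eta> \<partial>M)"
  proof (rule integral_mono[OF iL])
    show "integrable M (\<lambda>\<omega>. exp (\<eta> * Lf (Suc t) \<omega>) / \<eta>)" using ie by simp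
    fix \<omega> assume "\<omega> \<in> space M"
    have "\<eta> * Lf (Suc t) \<omega> \<le> exp (\<eta> * Lf (Suc t) \<omega>)"
      using exp_ge_add_one_self[of "\<eta> * Lf (Suc t) \<omega>"] by linarith
    then show "Lf (Suc t) \<omega> \<le> exp (\<eta> * Lf (Suc t) \<omega>) / \<eta>" using eta0 by (simp add: pos_le_divide_eq mult.commute)
  qed
  also have "\<dots> = m / \<eta>" unfolding m_def by simp
  also have "\<dots> \<le> (1 + H) / \<eta>" using m1 eta0 by (simp add: divide_right_mono)
  also have "\<dots> = (1 + H) / (Qc * G ^ n) * \<alpha> t" unfolding \<eta>_def using apt by simp
  finally show "integral\<^sup>L M (Lf (Suc t)) \<le> (1 + Hconst N Y lam \<kappa> G n) / (Qc * G ^ n) * \<alpha> t"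
    unfolding H_def .
  qed
qed

end

theorem proposition2:
  fixes X :: "'d::euclidean_space set" and f :: "'d \<Rightarrow> real" and xstar :: 'd
    and M :: "'a measure" and Fs :: "nat \<Rightarrow> 'a measure" and x :: "nat \<Rightarrow> 'a \<Rightarrow> 'd"
    and \<alpha> :: "nat \<Rightarrow> real" and \<kappa> B lam G :: real
    and N :: "'b measure" and Y :: "'b \<Rightarrow> real"
  assumes X: "X \<noteq> {}" "closed X" "bounded X" "convex X"
    and f_cont: "continuous_on X f"
    and xstar: "xstar \<in> X" "\<forall>y\<in>X. f xstar \<le> f y"
    and M: "prob_space M"
    and filt: "filtration (space M) Fs" "\<forall>t. subalgebra M (Fs t)"
    and adapted: "\<forall>t. x t \<in> Fs t \<rightarrow>\<^sub>M borel" "\<forall>t. \<forall>\<omega>\<in>space M. x t \<omega> \<in> X"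
    and A: "stepsize_A \<alpha>"
    and C1: "\<kappa> > 0" "B > 0"
      "\<forall>t. AE \<omega> in M. f (x t \<omega>) - f xstar \<ge> \<alpha> t * B \<longrightarrow>
           real_cond_exp M (Fs t) (\<lambda>\<omega>. f (x (Suc t) \<omega>) - f (x t \<omega>)) \<omega> \<le> - 2 * \<alpha> t * \<kappa>"
    and C2: "lam > 0" "prob_space N" "Y \<in> borel_measurable N" "\<forall>\<omega>\<in>space N. Y \<omega> \<ge> 0"
      "integrable N (\<lambda>\<omega>. exp (lam * Y \<omega>))"
      "\<forall>t. \<forall>y\<ge>0. AE \<omega> in M.
           real_cond_exp M (Fs t)
             (indicator {\<omega>'\<in>space M. \<bar>f (x (Suc t) \<omega>') - f (x t \<omega>')\<bar> \<ge> \<alpha> t * y}) \<omega>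
           \<le> measure N {\<omega>'\<in>space N. Y \<omega>' \<ge> y}"
    and G: "0 < G" "G \<le> 1" "\<forall>t\<ge>1. \<alpha> t \<ge> sqrt G * \<alpha> (t div 2)"
  defines "F \<equiv> Sup (f ` X) - Inf (f ` X)"
    and "L \<equiv> (\<lambda>t \<omega>. f (x t \<omega>) - f xstar - \<alpha> t * B)"
  shows "\<forall>n::nat. \<forall>t::nat. t div 2 ^ n \<ge> max (T0 \<alpha> \<kappa> B) 1 \<longrightarrow>
           (\<forall>z\<ge>0. measure M {\<omega>\<in>space M. L (Suc t) \<omega> \<ge> z}
              \<le> exp (- (Qconst N Y lam \<kappa> * G ^ n / \<alpha> t) *
                     (z - F - \<alpha> 0 * B + \<kappa> / 2 * (\<Sum>s\<in>{t div 2 ^ n..t}. \<alpha> s)))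
                + Hconst N Y lam \<kappa> G n * exp (- (Qconst N Y lam \<kappa> * G ^ n / \<alpha> t) * z))
           \<and> (\<kappa> / 2 * (\<Sum>s\<in>{t div 2 ^ n..t}. \<alpha> s) \<ge> F + \<alpha> 0 * B \<longrightarrow>
              integral\<^sup>L M (L (Suc t)) \<le> (1 + Hconst N Y lam \<kappa> G n) / (Qconst N Y lam \<kappa> * G ^ n) * \<alpha> t)"
  proof -
  interpret setting X f xstar M Fs x \<alpha> \<kappa> B lam G N Y
    by (rule setting.intro) (rule assms)+
  have LL: "\<And>t \<omega>. L t \<omega> = Lf t \<omega>" unfolding L_def Lf_def phi_def by simp
  have FF: "F = Fc" unfolding F_def Fc_def by simp
  have LL': "\<And>t. L t = Lf t" using LL by blast
  show ?thesis using final unfolding LL LL' FF Qc_def by simp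
qed

end
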